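(* Let $M$ be an $n$-manifold, $f:M\times[0,T)\to\mathbb R$ smooth, and $g(t)$, $t\in[0,T)$, a solution of the modified Ricci flow $\partial_tg_{ij}=-2R_{ij}+2\nabla_i\nabla_jf$. Let $\tau\in[0,T)$ and let $\tilde\nabla_\tau$ be as in the context on $\tilde M_\tau=M\times[0,T-\tau)$, with $f$ regarded as the function $(x,t)\mapsto f(x,t+\tau)$ on $\tilde M_\tau$. Then for all $1\le i,j,k\le n$: 1) $\tilde\nabla_j(\tilde R_{ki}-\tilde\nabla_k\tilde\nabla_if)=\tilde\nabla_k(\tilde R_{ji}-\tilde\nabla_j\tilde\nabla_if)+g_{pi}\tilde R_{kj0}^p$; 2) $\tilde\nabla_0(\tilde R_{ki}-\tilde\nabla_k\tilde\nabla_if)=\tilde\nabla_k(\tilde R_{0i}-\tilde\nabla_0\tilde\nabla_if)+g_{pk}\tilde R_{i00}^p$; 3) $\tilde\nabla_j(\tilde R_{0k}-\tilde\nabla_0\tilde\nabla_kf)=\tilde\nabla_k(\tilde R_{0j}-\tilde\nabla_0\tilde\nabla_jf)$; 4) $\tilde\nabla_0(\tilde R_{0k}-\tilde\nabla_0\tilde\nabla_kf)=\tilde\nabla_k(\tilde R_{00}-\tilde\nabla_0\tilde\nabla_0f)$, where $p$ is summed over $1,\dots,n$.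
   Context: Conventions for a metric $g$ on $M$ with Christoffel symbols $\Gamma_{ij}^k$: $R_{ijk}^l=\partial_i\Gamma_{jk}^l-\partial_j\Gamma_{ik}^l+\Gamma_{jk}^m\Gamma_{im}^l-\Gamma_{ik}^m\Gamma_{jm}^l$, $R_{jk}=R_{pjk}^p$, $R=g^{jk}R_{jk}$; indices raised with $g^{-1}$. Coordinates $x^1,\dots,x^n$ on $M$, $x^0=t$. Connection $\tilde\nabla_\tau$ with Christoffel symbols (left at $(x,t)$, right from $g,f$ at $(x,t+\tau)$): $\tilde\Gamma_{ij}^k=\Gamma_{ij}^k$ ($1\le i,j,k\le n$); $\tilde\Gamma_{ij}^0=0$ ($0\le i,j\le n$); $\tilde\Gamma_{i0}^k=\tilde\Gamma_{0i}^k=-R_i^k+\nabla_i\nabla^kf$ ($1\le i,k\le n$); $\tilde\Gamma_{00}^k=\nabla^k\big(-\tfrac12R+\tfrac{\partial f}{\partial t}-\tfrac12|\nabla f|^2\big)$ ($1\le k\le n$). Curvature $\tilde R_{ijk}^l=\partial_i\tilde\Gamma_{jk}^l-\partial_j\tilde\Gamma_{ik}^l+\sum_{m=0}^n(\tilde\Gamma_{jk}^m\tilde\Gamma_{im}^l-\tilde\Gamma_{ik}^m\tilde\Gamma_{jm}^l)$ (indices in $\{0,\dots,n\}$, $\partial_0=\partial_t$); Ricci tensor $\tilde R_{jk}=\sum_{p=0}^n\tilde R_{pjk}^p$. $\tilde\nabla_a\tilde\nabla_bf=\partial_a\partial_bf-\sum_{m=0}^n\tilde\Gamma_{ab}^m\partial_mf$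 is the Hessian of $f$ with respect to $\tilde\nabla_\tau$, and $\tilde\nabla_a$ applied to a $(0,2)$-tensor is covariant differentiation with respect to $\tilde\nabla_\tau$; $g_{pi}$ is evaluated at $(x,t+\tau)$. *)

theory Defs
  imports "HOL-Analysis.Analysis"
begin

text \<open>Space-time points (x,t) in local coordinates: x in R^n (index type 'n), t real.
  Space-time indices are of type 'n option: None is the time index 0, Some i the
  spatial index i.\<close>

type_synonym 'n pt = "(real^'n) \<times> real"

definition dirv :: "'n::finite option \<Rightarrow> 'n pt" where
  "dirv a = (case a of None \<Rightarrow> (0, 1) | Some i \<Rightarrow> (axis i 1, 0))"

definition pd :: "'n::finite pt set \<Rightarrow> ('n pt \<Rightarrow> real) \<Rightarrow> 'n option \<Rightarrow> 'n pt \<Rightarrow> real" where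
  "pd D F a p = frechet_derivative F (at p within D) (dirv a)"

fun Ck :: "nat \<Rightarrow> 'n::finite pt set \<Rightarrow> ('n pt \<Rightarrow> real) \<Rightarrow> bool" where
  "Ck 0 D F = continuous_on D F"
| "Ck (Suc k) D F = ((\<forall>p\<in>D. F differentiable (at p within D)) \<and> (\<forall>a. Ck k D (pd D F a)))"

definition smooth_fun :: "'n::finite pt set \<Rightarrow> ('n pt \<Rightarrow> real) \<Rightarrow> bool" where
  "smooth_fun D F = (\<forall>k. Ck k D F)"

text \<open>Geometry of the metric g(t) on M (spatial indices only), at the point p = (x,t).
  g i j p = g_{ij}(x,t).\<close>

type_synonym 'n metric = "'n \<Rightarrow> 'n \<Rightarrow> 'n pt \<Rightarrow> real"

definition ginv :: "'n::finite metric \<Rightarrow> 'n \<Rightarrow> 'n \<Rightarrow> 'n pt \<Rightarrow> real" where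
  "ginv g k l p = matrix_inv (\<chi> a b. g a b p) $ k $ l"

definition Chr :: "'n::finite pt set \<Rightarrow> 'n metric \<Rightarrow> 'n \<Rightarrow> 'n \<Rightarrow> 'n \<Rightarrow> 'n pt \<Rightarrow> real" where
  "Chr D g i j k p = (1/2) * (\<Sum>l\<in>UNIV. ginv g k l p *
      (pd D (g j l) (Some i) p + pd D (g i l) (Some j) p - pd D (g i j) (Some l) p))"

text \<open>R_{ijk}^l = Riem D g i j k l.\<close>
definition Riem :: "'n::finite pt set \<Rightarrow> 'n metric \<Rightarrow> 'n \<Rightarrow> 'n \<Rightarrow> 'n \<Rightarrow> 'n \<Rightarrow> 'n pt \<Rightarrow> real" where
  "Riem D g i j k l p =
     pd D (Chr D g j k l) (Some i) p - pd D (Chr D g i k l) (Some j) p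
     + (\<Sum>m\<in>UNIV. Chr D g j k m p * Chr D g i m l p - Chr D g i k m p * Chr D g j m l p)"

definition Ric :: "'n::finite pt set \<Rightarrow> 'n metric \<Rightarrow> 'n \<Rightarrow> 'n \<Rightarrow> 'n pt \<Rightarrow> real" where
  "Ric D g j k p = (\<Sum>q\<in>UNIV. Riem D g q j k q p)"

definition Scal :: "'n::finite pt set \<Rightarrow> 'n metric \<Rightarrow> 'n pt \<Rightarrow> real" where
  "Scal D g p = (\<Sum>j\<in>UNIV. \<Sum>k\<in>UNIV. ginv g j k p * Ric D g j k p)"

definition RicUp :: "'n::finite pt set \<Rightarrow> 'n metric \<Rightarrow> 'n \<Rightarrow> 'n \<Rightarrow> 'n pt \<Rightarrow> real" where
  "RicUp D g i k p = (\<Sum>l\<in>UNIV. ginv g k l p * Ric D g i l p)"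

definition Hess :: "'n::finite pt set \<Rightarrow> 'n metric \<Rightarrow> ('n pt \<Rightarrow> real) \<Rightarrow> 'n \<Rightarrow> 'n \<Rightarrow> 'n pt \<Rightarrow> real" where
  "Hess D g f i j p = pd D (pd D f (Some j)) (Some i) p
      - (\<Sum>m\<in>UNIV. Chr D g i j m p * pd D f (Some m) p)"

definition HessUp :: "'n::finite pt set \<Rightarrow> 'n metric \<Rightarrow> ('n pt \<Rightarrow> real) \<Rightarrow> 'n \<Rightarrow> 'n \<Rightarrow> 'n pt \<Rightarrow> real" where
  "HessUp D g f i k p = (\<Sum>l\<in>UNIV. ginv g k l p * Hess D g f i l p)"

definition gradUp :: "'n::finite pt set \<Rightarrow> 'n metric \<Rightarrow> ('n pt \<Rightarrow> real) \<Rightarrow> 'n \<Rightarrow> 'n pt \<Rightarrow> real" where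
  "gradUp D g h k p = (\<Sum>l\<in>UNIV. ginv g k l p * pd D h (Some l) p)"

definition gradSq :: "'n::finite pt set \<Rightarrow> 'n metric \<Rightarrow> ('n pt \<Rightarrow> real) \<Rightarrow> 'n pt \<Rightarrow> real" where
  "gradSq D g f p = (\<Sum>i\<in>UNIV. \<Sum>j\<in>UNIV. ginv g i j p * pd D f (Some i) p * pd D f (Some j) p)"

definition shift :: "real \<Rightarrow> 'n pt \<Rightarrow> 'n pt" where
  "shift \<tau> p = (fst p, snd p + \<tau>)"

text \<open>Christoffel symbols of the connection tilde-nabla_tau:
  TChr D g f tau a b c p = tilde-Gamma_{ab}^c at p = (x,t), with the right-hand sides
  computed from g, f on D at (x,t+tau).\<close>
definition TChr :: "'n::finite pt set \<Rightarrow> 'n metric \<Rightarrow> ('n pt \<Rightarrow> real) \<Rightarrow> real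
     \<Rightarrow> 'n option \<Rightarrow> 'n option \<Rightarrow> 'n option \<Rightarrow> 'n pt \<Rightarrow> real" where
  "TChr D g f \<tau> a b c p =
    (case c of
       None \<Rightarrow> 0
     | Some k \<Rightarrow>
        (case (a, b) of
           (Some i, Some j) \<Rightarrow> Chr D g i j k (shift \<tau> p)
         | (Some i, None) \<Rightarrow> - RicUp D g i k (shift \<tau> p) + HessUp D g f i k (shift \<tau> p)
         | (None, Some i) \<Rightarrow> - RicUp D g i k (shift \<tau> p) + HessUp D g f i k (shift \<tau> p)
         | (None, None) \<Rightarrow>
             gradUp D g (\<lambda>q. - (1/2) * Scal D g q + pd D f None q - (1/2) * gradSq D g f q) k
               (shift \<tau> p)))"

definition TRiem :: "'n::finite pt set \<Rightarrow> 'n pt set \<Rightarrow> 'n metric \<Rightarrow> ('n pt \<Rightarrow> real) \<Rightarrow> real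
     \<Rightarrow> 'n option \<Rightarrow> 'n option \<Rightarrow> 'n option \<Rightarrow> 'n option \<Rightarrow> 'n pt \<Rightarrow> real" where
  "TRiem D D' g f \<tau> a b c d p =
     pd D' (TChr D g f \<tau> b c d) a p - pd D' (TChr D g f \<tau> a c d) b p
     + (\<Sum>m\<in>UNIV. TChr D g f \<tau> b c m p * TChr D g f \<tau> a m d p
                 - TChr D g f \<tau> a c m p * TChr D g f \<tau> b m d p)"

definition TRic :: "'n::finite pt set \<Rightarrow> 'n pt set \<Rightarrow> 'n metric \<Rightarrow> ('n pt \<Rightarrow> real) \<Rightarrow> real
     \<Rightarrow> 'n option \<Rightarrow> 'n option \<Rightarrow> 'n pt \<Rightarrow> real" where
  "TRic D D' g f \<tau> b c p = (\<Sum>q\<in>UNIV. TRiem D D' g f \<tau> q b c q p)"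

definition THess :: "'n::finite pt set \<Rightarrow> 'n pt set \<Rightarrow> 'n metric \<Rightarrow> ('n pt \<Rightarrow> real) \<Rightarrow> real
     \<Rightarrow> ('n pt \<Rightarrow> real) \<Rightarrow> 'n option \<Rightarrow> 'n option \<Rightarrow> 'n pt \<Rightarrow> real" where
  "THess D D' g f \<tau> h a b p = pd D' (pd D' h b) a p
      - (\<Sum>m\<in>UNIV. TChr D g f \<tau> a b m p * pd D' h m p)"

definition TCov2 :: "'n::finite pt set \<Rightarrow> 'n pt set \<Rightarrow> 'n metric \<Rightarrow> ('n pt \<Rightarrow> real) \<Rightarrow> real
     \<Rightarrow> ('n option \<Rightarrow> 'n option \<Rightarrow> 'n pt \<Rightarrow> real) \<Rightarrow> 'n option \<Rightarrow> 'n option \<Rightarrow> 'n option \<Rightarrow> 'n pt \<Rightarrow> real" where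
  "TCov2 D D' g f \<tau> A a b c p = pd D' (A b c) a p
      - (\<Sum>m\<in>UNIV. TChr D g f \<tau> a b m p * A m c p)
      - (\<Sum>m\<in>UNIV. TChr D g f \<tau> a c m p * A b m p)"

end

theory Submission
  imports Defs
begin


lemma sum_swap_in: "(\<Sum>a\<in>A. \<Sum>b\<in>B. \<Sum>c\<in>C. F a b c) = (\<Sum>a\<in>A. \<Sum>c\<in>C. \<Sum>b\<in>B. (F a b c :: real))"
  by (rule sum.cong[OF refl]) (rule sum.swap)

lemma sum3_rot: "(\<Sum>a\<in>A. \<Sum>b\<in>B. \<Sum>c\<in>C. F a b c) = (\<Sum>b\<in>B. \<Sum>c\<in>C. \<Sum>a\<in>A. (F a b c :: real))"
proof -
  have "(\<Sum>a\<in>A. \<Sum>b\<in>B. \<Sum>c\<in>C. F a b c) = (\<Sum>b\<in>B. \<Sum>a\<in>A. \<Sum>c\<in>C. F a b c)" by (rule sum.swap)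
  also have "\<dots> = (\<Sum>b\<in>B. \<Sum>c\<in>C. \<Sum>a\<in>A. F a b c)" by (rule sum.cong[OF refl]) (rule sum.swap)
  finally show ?thesis .
qed

lemma sum3_rotr: "(\<Sum>a\<in>A. \<Sum>b\<in>B. \<Sum>c\<in>C. F a b c) = (\<Sum>c\<in>C. \<Sum>a\<in>A. \<Sum>b\<in>B. (F a b c :: real))"
  using sum3_rot[where F="\<lambda>c a b. F a b c" and A=C and B=A and C=B] by simp

lemma sum3_rev: "(\<Sum>a\<in>A. \<Sum>b\<in>B. \<Sum>c\<in>C. F a b c) = (\<Sum>c\<in>C. \<Sum>b\<in>B. \<Sum>a\<in>A. (F a b c :: real))"
proof -
  have "(\<Sum>a\<in>A. \<Sum>b\<in>B. \<Sum>c\<in>C. F a b c) = (\<Sum>b\<in>B. \<Sum>c\<in>C. \<Sum>a\<in>A. F a b c)" by (rule sum3_rot)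
  also have "\<dots> = (\<Sum>c\<in>C. \<Sum>b\<in>B. \<Sum>a\<in>A. F a b c)" by (rule sum.swap)
  finally show ?thesis .
qed

locale dcalc =
  fixes X :: "'p set" and sm :: "('p \<Rightarrow> real) \<Rightarrow> bool"
    and d :: "('p \<Rightarrow> real) \<Rightarrow> 'i::finite \<Rightarrow> 'p \<Rightarrow> real"
  assumes sm_const: "sm (\<lambda>x. c)"
  and sm_add: "sm F \<Longrightarrow> sm G \<Longrightarrow> sm (\<lambda>x. F x + G x)"
  and sm_mult: "sm F \<Longrightarrow> sm G \<Longrightarrow> sm (\<lambda>x. F x * G x)"
  and sm_d: "sm F \<Longrightarrow> sm (d F a)"
  and d_add: "sm F \<Longrightarrow> sm G \<Longrightarrow> x \<in> X \<Longrightarrow> d (\<lambda>x. F x + G x) a x = d F a x + d G a x"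
  and d_mult: "sm F \<Longrightarrow> sm G \<Longrightarrow> x \<in> X \<Longrightarrow> d (\<lambda>x. F x * G x) a x = F x * d G a x + d F a x * G x"
  and d_const: "x \<in> X \<Longrightarrow> d (\<lambda>x. c) a x = 0"
  and d_cong: "(\<And>y. y \<in> X \<Longrightarrow> F y = G y) \<Longrightarrow> x \<in> X \<Longrightarrow> d F a x = d G a x"
  and d_comm: "sm F \<Longrightarrow> x \<in> X \<Longrightarrow> d (d F a) b x = d (d F b) a x"
begin

lemma sm_uminus: "sm F \<Longrightarrow> sm (\<lambda>x. - F x)"
proof -
  assume "sm F"
  then have "sm (\<lambda>x. (-1) * F x)" by (intro sm_mult sm_const)
  then show ?thesis by simp
qed

lemma sm_diff: "sm F \<Longrightarrow> sm G \<Longrightarrow> sm (\<lambda>x. F x - G x)"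
  using sm_add[OF _ sm_uminus, of F G] by simp

lemma sm_sum: "(\<And>m. m \<in> A \<Longrightarrow> sm (F m)) \<Longrightarrow> sm (\<lambda>x. \<Sum>m\<in>A. F m x)"
proof (induction A rule: infinite_finite_induct)
  case (infinite A) then show ?case using sm_const by simp
next
  case empty then show ?case using sm_const by simp
next
  case (insert a A) then show ?case by (simp add: sm_add)
qed

lemma sm_sum': "(\<And>m. sm (F m)) \<Longrightarrow> sm (\<lambda>x. \<Sum>m\<in>A. F m x)"
  by (rule sm_sum) auto

lemma d_uminus: "sm F \<Longrightarrow> x \<in> X \<Longrightarrow> d (\<lambda>x. - F x) a x = - d F a x"
proof -
  assume a: "sm F" "x \<in> X"
  have "d (\<lambda>x. - F x) a x = d (\<lambda>x. (-1) * F x) a x" by simp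
  also have "\<dots> = - d F a x" using d_mult[OF sm_const a(1) a(2), of "-1" a] a by (simp add: d_const)
  finally show ?thesis .
qed

lemma d_diff: "sm F \<Longrightarrow> sm G \<Longrightarrow> x \<in> X \<Longrightarrow> d (\<lambda>x. F x - G x) a x = d F a x - d G a x"
  using d_add[OF _ sm_uminus, of F G x a] d_uminus[of G x a] by simp

lemma d_sum: "finite A \<Longrightarrow> (\<And>m. m \<in> A \<Longrightarrow> sm (F m)) \<Longrightarrow> x \<in> X \<Longrightarrow>
   d (\<lambda>x. \<Sum>m\<in>A. F m x) a x = (\<Sum>m\<in>A. d (F m) a x)"
proof (induction A rule: finite_induct)
  case empty then show ?case by (simp add: d_const)
next
  case (insert b A)
  have "d (\<lambda>x. \<Sum>m\<in>insert b A. F m x) a x = d (\<lambda>x. F b x + (\<Sum>m\<in>A. F m x)) a x"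
    using insert by simp
  also have "\<dots> = d (F b) a x + d (\<lambda>x. \<Sum>m\<in>A. F m x) a x"
    using insert by (intro d_add sm_sum) auto
  finally show ?case using insert by simp
qed

lemma d_sum': "(\<And>m. sm (F (m::'b::finite))) \<Longrightarrow> x \<in> X \<Longrightarrow>
   d (\<lambda>x. \<Sum>m\<in>UNIV. F m x) a x = (\<Sum>m\<in>UNIV. d (F m) a x)"
  by (rule d_sum) auto

lemma d_cmult: "sm F \<Longrightarrow> x \<in> X \<Longrightarrow> d (\<lambda>x. c * F x) a x = c * d F a x"
  using d_mult[OF sm_const, of F x c a] by (simp add: d_const)

lemmas sm_rules = sm_const sm_add sm_mult sm_d sm_uminus sm_diff sm_sum'
lemmas d_rules = d_add d_mult d_const d_uminus d_diff d_sum' d_cmult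

end

locale tfc = dcalc X sm d for X :: "'p set" and sm and d :: "('p \<Rightarrow> real) \<Rightarrow> 'i::finite \<Rightarrow> 'p \<Rightarrow> real" +
  fixes \<Gamma> :: "'i \<Rightarrow> 'i \<Rightarrow> 'i \<Rightarrow> 'p \<Rightarrow> real"
  assumes \<Gamma>_sm: "sm (\<Gamma> a b c)"
  and \<Gamma>_sym: "x \<in> X \<Longrightarrow> \<Gamma> a b c x = \<Gamma> b a c x"
begin

definition Rm :: "'i \<Rightarrow> 'i \<Rightarrow> 'i \<Rightarrow> 'i \<Rightarrow> 'p \<Rightarrow> real" where
  "Rm a b c e = (\<lambda>x. d (\<Gamma> b c e) a x - d (\<Gamma> a c e) b x
      + (\<Sum>m\<in>UNIV. \<Gamma> b c m x * \<Gamma> a m e x - \<Gamma> a c m x * \<Gamma> b m e x))"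

lemma Rm_sm[simp]: "sm (Rm a b c e)"
  unfolding Rm_def by (intro sm_rules \<Gamma>_sm)

lemma Rm_anti: "Rm a b c e x = - Rm b a c e x"
  unfolding Rm_def by (simp add: sum_subtractf)

definition nabR :: "'i \<Rightarrow> 'i \<Rightarrow> 'i \<Rightarrow> 'i \<Rightarrow> 'i \<Rightarrow> 'p \<Rightarrow> real" where
  "nabR f a b c e = (\<lambda>x. d (Rm a b c e) f x - (\<Sum>m\<in>UNIV. \<Gamma> f a m x * Rm m b c e x)
     - (\<Sum>m\<in>UNIV. \<Gamma> f b m x * Rm a m c e x) - (\<Sum>m\<in>UNIV. \<Gamma> f c m x * Rm a b m e x)
     + (\<Sum>m\<in>UNIV. \<Gamma> f m e x * Rm a b c m x))"

lemma dRm: "x \<in> X \<Longrightarrow> d (Rm a b c e) f x = d (d (\<Gamma> b c e) a) f x - d (d (\<Gamma> a c e) b) f x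
   + (\<Sum>m\<in>UNIV. d (\<Gamma> b c m) f x * \<Gamma> a m e x) + (\<Sum>m\<in>UNIV. \<Gamma> b c m x * d (\<Gamma> a m e) f x)
   - (\<Sum>m\<in>UNIV. d (\<Gamma> a c m) f x * \<Gamma> b m e x) - (\<Sum>m\<in>UNIV. \<Gamma> a c m x * d (\<Gamma> b m e) f x)"
  unfolding Rm_def
  by (simp add: d_rules sm_rules \<Gamma>_sm sum.distrib sum_subtractf algebra_simps)

lemma T1pair: "x \<in> X \<Longrightarrow> (\<Sum>m\<in>UNIV. \<Gamma> e a m x * Rm m b c dd x) + (\<Sum>m\<in>UNIV. \<Gamma> a e m x * Rm b m c dd x) = 0"
proof -
  assume x: "x \<in> X"
  have "(\<Sum>m\<in>UNIV. \<Gamma> a e m x * Rm b m c dd x) = (\<Sum>m\<in>UNIV. - (\<Gamma> e a m x * Rm m b c dd x))"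
    by (rule sum.cong) (simp_all add: \<Gamma>_sym[OF x, of a e] Rm_anti[of b])
  then show ?thesis by (simp add: sum_negf)
qed

lemma RmG1: "x \<in> X \<Longrightarrow> (\<Sum>m\<in>UNIV. \<Gamma> e c m x * Rm a b m dd x) =
   (\<Sum>m\<in>UNIV. \<Gamma> e c m x * d (\<Gamma> b m dd) a x) - (\<Sum>m\<in>UNIV. \<Gamma> e c m x * d (\<Gamma> a m dd) b x)
   + (\<Sum>m\<in>UNIV. \<Sum>p\<in>UNIV. \<Gamma> e c m x * (\<Gamma> b m p x * \<Gamma> a p dd x))
   - (\<Sum>m\<in>UNIV. \<Sum>p\<in>UNIV. \<Gamma> e c m x * (\<Gamma> a m p x * \<Gamma> b p dd x))"
  unfolding Rm_def by (simp add: algebra_simps sum.distrib sum_subtractf sum_distrib_left)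

lemma RmG2: "x \<in> X \<Longrightarrow> (\<Sum>m\<in>UNIV. \<Gamma> e m dd x * Rm a b c m x) =
   (\<Sum>m\<in>UNIV. \<Gamma> e m dd x * d (\<Gamma> b c m) a x) - (\<Sum>m\<in>UNIV. \<Gamma> e m dd x * d (\<Gamma> a c m) b x)
   + (\<Sum>p\<in>UNIV. \<Sum>m\<in>UNIV. \<Gamma> e m dd x * (\<Gamma> b c p x * \<Gamma> a p m x))
   - (\<Sum>p\<in>UNIV. \<Sum>m\<in>UNIV. \<Gamma> e m dd x * (\<Gamma> a c p x * \<Gamma> b p m x))"
  unfolding Rm_def
  apply (simp add: algebra_simps sum.distrib sum_subtractf sum_distrib_left)
  apply (subst (1 2) sum.swap) apply simp
  done

lemma bianchi2: "x \<in> X \<Longrightarrow> nabR e a b c dd x + nabR a b e c dd x + nabR b e a c dd x = 0"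
proof -
  assume x: "x \<in> X"
  note T = T1pair[OF x, of e a b c dd] T1pair[OF x, of a b e c dd] T1pair[OF x, of b e a c dd]
  note dc = d_comm[OF \<Gamma>_sm x]
  show ?thesis
    unfolding nabR_def using T
    apply (simp add: dRm[OF x] RmG1[OF x] RmG2[OF x] dc)
    apply (simp add: algebra_simps)
    done
qed

definition Rc :: "'i \<Rightarrow> 'i \<Rightarrow> 'p \<Rightarrow> real" where
  "Rc b c = (\<lambda>x. \<Sum>q\<in>UNIV. Rm q b c q x)"

definition nab1 :: "('i \<Rightarrow> 'p \<Rightarrow> real) \<Rightarrow> 'i \<Rightarrow> 'i \<Rightarrow> 'p \<Rightarrow> real" where
  "nab1 w a b = (\<lambda>x. d (w b) a x - (\<Sum>m\<in>UNIV. \<Gamma> a b m x * w m x))"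

definition nab2 :: "('i \<Rightarrow> 'i \<Rightarrow> 'p \<Rightarrow> real) \<Rightarrow> 'i \<Rightarrow> 'i \<Rightarrow> 'i \<Rightarrow> 'p \<Rightarrow> real" where
  "nab2 T a b c = (\<lambda>x. d (T b c) a x - (\<Sum>m\<in>UNIV. \<Gamma> a b m x * T m c x)
      - (\<Sum>m\<in>UNIV. \<Gamma> a c m x * T b m x))"

lemma Rc_sm[simp]: "sm (Rc b c)"
  unfolding Rc_def by (intro sm_rules) simp

lemma nab1_sm[simp]: "(\<And>b. sm (w b)) \<Longrightarrow> sm (nab1 w a b)"
  unfolding nab1_def by (intro sm_rules \<Gamma>_sm) auto

lemma nab2_sm[simp]: "(\<And>b c. sm (T b c)) \<Longrightarrow> sm (nab2 T a b c)"
  unfolding nab2_def by (intro sm_rules \<Gamma>_sm) auto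

lemma bianchi1: "x \<in> X \<Longrightarrow> Rm a b c e x + Rm b c a e x + Rm c a b e x = 0"
proof -
  assume x: "x \<in> X"
  have s: "\<And>a b c. d (\<Gamma> a b c) e x = d (\<Gamma> b a c) e x" for e
    by (rule d_cong[OF _ x]) (rule \<Gamma>_sym)
  show ?thesis unfolding Rm_def
    by (simp add: s[of c b] s[of c a] s[of b a] \<Gamma>_sym[OF x, of c b] \<Gamma>_sym[OF x, of c a] \<Gamma>_sym[OF x, of b a]
          sum_subtractf sum.distrib algebra_simps)
qed

lemma sumRm2: "(\<Sum>e\<in>UNIV. Rm b e c e x) = - Rc b c x"
  unfolding Rc_def by (subst Rm_anti) (simp add: sum_negf)

lemma cb_part2: "x \<in> X \<Longrightarrow> (\<Sum>e\<in>UNIV. nabR a b e c e x) = - nab2 Rc a b c x"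
proof -
  assume x: "x \<in> X"
  have 1: "(\<Sum>e\<in>UNIV. d (Rm b e c e) a x) = - d (Rc b c) a x"
  proof -
    have "(\<Sum>e\<in>UNIV. d (Rm b e c e) a x) = d (\<lambda>y. \<Sum>e\<in>UNIV. Rm b e c e y) a x"
      using x by (simp add: d_sum')
    also have "\<dots> = d (\<lambda>y. - Rc b c y) a x"
      by (rule d_cong[OF _ x]) (simp add: sumRm2)
    also have "\<dots> = - d (Rc b c) a x" using x by (simp add: d_uminus)
    finally show ?thesis .
  qed
  have 2: "(\<Sum>e\<in>UNIV. \<Sum>m\<in>UNIV. \<Gamma> a m e x * Rm b e c m x) = (\<Sum>e\<in>UNIV. \<Sum>m\<in>UNIV. \<Gamma> a e m x * Rm b m c e x)"
    by (rule sum.swap)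
  have 3: "(\<Sum>e\<in>UNIV. \<Sum>m\<in>UNIV. \<Gamma> a b m x * Rm m e c e x) = (\<Sum>m\<in>UNIV. \<Gamma> a b m x * - Rc m c x)"
    by (subst sum.swap) (simp add: sum_distrib_left[symmetric] sumRm2)
  have 4: "(\<Sum>e\<in>UNIV. \<Sum>m\<in>UNIV. \<Gamma> a c m x * Rm b e m e x) = (\<Sum>m\<in>UNIV. \<Gamma> a c m x * - Rc b m x)"
    by (subst sum.swap) (simp add: sum_distrib_left[symmetric] sumRm2)
  show ?thesis
    unfolding nabR_def nab2_def using 1 2 3 4
    by (simp add: sum_subtractf sum.distrib sum_negf)
qed

lemma cb_part3: "x \<in> X \<Longrightarrow> (\<Sum>e\<in>UNIV. nabR b e a c e x) = nab2 Rc b a c x"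
proof -
  assume x: "x \<in> X"
  have 1: "(\<Sum>e\<in>UNIV. d (Rm e a c e) b x) = d (Rc a c) b x"
    using x unfolding Rc_def by (simp add: d_sum')
  have 2: "(\<Sum>e\<in>UNIV. \<Sum>m\<in>UNIV. \<Gamma> b m e x * Rm e a c m x) = (\<Sum>e\<in>UNIV. \<Sum>m\<in>UNIV. \<Gamma> b e m x * Rm m a c e x)"
    by (rule sum.swap)
  have 3: "(\<Sum>e\<in>UNIV. \<Sum>m\<in>UNIV. \<Gamma> b a m x * Rm e m c e x) = (\<Sum>m\<in>UNIV. \<Gamma> b a m x * Rc m c x)"
    unfolding Rc_def by (subst sum.swap) (simp add: sum_distrib_left[symmetric])
  have 4: "(\<Sum>e\<in>UNIV. \<Sum>m\<in>UNIV. \<Gamma> b c m x * Rm e a m e x) = (\<Sum>m\<in>UNIV. \<Gamma> b c m x * Rc a m x)"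
    unfolding Rc_def by (subst sum.swap) (simp add: sum_distrib_left[symmetric])
  show ?thesis
    unfolding nabR_def nab2_def using 1 2 3 4
    by (simp add: sum_subtractf sum.distrib)
qed

lemma contracted_bianchi: "x \<in> X \<Longrightarrow> (\<Sum>e\<in>UNIV. nabR e a b c e x) = nab2 Rc a b c x - nab2 Rc b a c x"
proof -
  assume x: "x \<in> X"
  have "(\<Sum>e\<in>UNIV. nabR e a b c e x + nabR a b e c e x + nabR b e a c e x) = 0"
    using bianchi2[OF x] by simp
  then show ?thesis using cb_part2[OF x, of a b c] cb_part3[OF x, of b a c]
    by (simp add: sum.distrib)
qed

lemma sumRw: "x \<in> X \<Longrightarrow> (\<Sum>p\<in>UNIV. Rm a b c p x * w p x) =
   (\<Sum>p\<in>UNIV. d (\<Gamma> b c p) a x * w p x) - (\<Sum>p\<in>UNIV. d (\<Gamma> a c p) b x * w p x)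
   + (\<Sum>m\<in>UNIV. \<Sum>p\<in>UNIV. \<Gamma> b c m x * (\<Gamma> a m p x * w p x))
   - (\<Sum>m\<in>UNIV. \<Sum>p\<in>UNIV. \<Gamma> a c m x * (\<Gamma> b m p x * w p x))"
  unfolding Rm_def
  apply (simp add: algebra_simps sum.distrib sum_subtractf sum_distrib_left sum_distrib_right)
  apply (subst (1 2) sum.swap) apply (simp add: algebra_simps)
  done

lemma ricci_identity1:
  assumes w: "\<And>b. sm (w b)" and x: "x \<in> X"
  shows "nab2 (nab1 w) a b c x - nab2 (nab1 w) b a c x = - (\<Sum>p\<in>UNIV. Rm a b c p x * w p x)"
proof -
  note dc = d_comm[OF w x]
  show ?thesis
    unfolding nab2_def nab1_def sumRw[OF x]
    using x w
    by (simp add: d_rules sm_rules \<Gamma>_sm \<Gamma>_sym[OF x, of b a] dc sum_subtractf sum.distrib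
        sum_distrib_left algebra_simps)
qed

definition Hs :: "('p \<Rightarrow> real) \<Rightarrow> 'i \<Rightarrow> 'i \<Rightarrow> 'p \<Rightarrow> real" where
  "Hs F = nab1 (\<lambda>m. d F m)"

lemma Hs_sym: "sm F \<Longrightarrow> x \<in> X \<Longrightarrow> Hs F a b x = Hs F b a x"
  unfolding Hs_def nab1_def by (simp add: d_comm \<Gamma>_sym[of x b a])

lemma Hs_sm[simp]: "sm F \<Longrightarrow> sm (Hs F a b)"
  unfolding Hs_def by (intro nab1_sm sm_d)

definition div11 :: "('i \<Rightarrow> 'i \<Rightarrow> 'p \<Rightarrow> real) \<Rightarrow> 'i \<Rightarrow> 'p \<Rightarrow> real" where
  "div11 Y a = (\<lambda>x. \<Sum>e\<in>UNIV. d (Y a e) e x - (\<Sum>m\<in>UNIV. \<Gamma> e a m x * Y m e x)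
                + (\<Sum>m\<in>UNIV. \<Gamma> e m e x * Y a m x))"

lemma Rc_div: "x \<in> X \<Longrightarrow> Rc k c x = div11 (\<lambda>a p. \<Gamma> a c p) k x - d (\<lambda>y. \<Sum>q\<in>UNIV. \<Gamma> q c q y) k x"
proof -
  assume x: "x \<in> X"
  have 1: "(\<Sum>e\<in>UNIV. \<Sum>m\<in>UNIV. \<Gamma> e c m x * \<Gamma> k m e x) = (\<Sum>e\<in>UNIV. \<Sum>m\<in>UNIV. \<Gamma> e k m x * \<Gamma> m c e x)"
    apply (subst sum.swap) by (simp add: \<Gamma>_sym[OF x, of k] mult.commute)
  show ?thesis unfolding Rc_def Rm_def div11_def using x 1
    by (simp add: d_sum' \<Gamma>_sm sum_subtractf sum.distrib algebra_simps)
qed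

end

locale tfcm = tfc X sm d \<Gamma> for X :: "'p set" and sm and d :: "('p \<Rightarrow> real) \<Rightarrow> 'i::finite \<Rightarrow> 'p \<Rightarrow> real" and \<Gamma> +
  fixes sp :: "'i set" and hu hl :: "'i \<Rightarrow> 'i \<Rightarrow> 'p \<Rightarrow> real"
  assumes hu_sm: "sm (hu a b)" and hl_sm: "sm (hl a b)"
  and hu_sym: "x \<in> X \<Longrightarrow> hu a b x = hu b a x"
  and hl_sym: "x \<in> X \<Longrightarrow> hl a b x = hl b a x"
  and hu_out: "a \<notin> sp \<or> b \<notin> sp \<Longrightarrow> hu a b x = 0"
  and hl_out: "a \<notin> sp \<or> b \<notin> sp \<Longrightarrow> hl a b x = 0"
  and \<Gamma>_out: "c \<notin> sp \<Longrightarrow> \<Gamma> a b c x = 0"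
  and huhl: "x \<in> X \<Longrightarrow> (\<Sum>m\<in>UNIV. hu a m x * hl m b x) = (if a = b \<and> a \<in> sp then 1 else 0)"
begin

definition par :: "'i \<Rightarrow> bool" where
  "par a \<longleftrightarrow> (\<forall>x\<in>X. \<forall>b c. d (hu b c) a x = - (\<Sum>m\<in>UNIV. \<Gamma> a m b x * hu m c x) - (\<Sum>m\<in>UNIV. \<Gamma> a m c x * hu b m x))"

definition parL :: "'i \<Rightarrow> bool" where
  "parL a \<longleftrightarrow> (\<forall>x\<in>X. \<forall>b c. b \<in> sp \<longrightarrow> c \<in> sp \<longrightarrow>
      d (hl b c) a x = (\<Sum>m\<in>UNIV. \<Gamma> a b m x * hl m c x) + (\<Sum>m\<in>UNIV. \<Gamma> a c m x * hl b m x))"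

lemma parD: "par a \<Longrightarrow> x \<in> X \<Longrightarrow> d (hu b c) a x = - (\<Sum>m\<in>UNIV. \<Gamma> a m b x * hu m c x) - (\<Sum>m\<in>UNIV. \<Gamma> a m c x * hu b m x)"
  unfolding par_def by blast

lemma hlhu: "x \<in> X \<Longrightarrow> (\<Sum>m\<in>UNIV. hl a m x * hu m b x) = (if a = b \<and> a \<in> sp then 1 else 0)"
proof -
  assume x: "x \<in> X"
  have "(\<Sum>m\<in>UNIV. hl a m x * hu m b x) = (\<Sum>m\<in>UNIV. hu b m x * hl m a x)"
    by (rule sum.cong) (auto simp: hu_sym[OF x, of m b for m] hl_sym[OF x, of a] mult.commute)
  then show ?thesis using huhl[OF x, of b a] by auto
qed

lemma d_zero: "(\<And>y. y \<in> X \<Longrightarrow> F y = 0) \<Longrightarrow> x \<in> X \<Longrightarrow> d F a x = 0"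
  using d_cong[of F "\<lambda>_. 0" x a] d_const by simp

lemma Rm_out: "e \<notin> sp \<Longrightarrow> x \<in> X \<Longrightarrow> Rm a b c e x = 0"
  unfolding Rm_def by (simp add: d_zero \<Gamma>_out)

lemma dhu_out: "c \<notin> sp \<Longrightarrow> x \<in> X \<Longrightarrow> d (hu a c) e x = 0"
  by (rule d_zero) (simp_all add: hu_out)

lemma sum_delta: "(\<Sum>m\<in>UNIV. (F m :: real) * (if m = c \<and> m \<in> sp then 1 else 0)) = (if c \<in> sp then F c else 0)"
proof -
  have "\<And>m. F m * (if m = c \<and> m \<in> sp then 1 else 0) = (if m = c then (if c \<in> sp then F c else 0) else 0)"
    by auto
  then show ?thesis by simp
qed

lemma sum_delta': "(\<Sum>m\<in>UNIV. (F m :: real) * (if c = m \<and> c \<in> sp then 1 else 0)) = (if c \<in> sp then F c else 0)"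
proof -
  have "\<And>m. F m * (if c = m \<and> c \<in> sp then 1 else 0) = (if m = c then (if c \<in> sp then F c else 0) else 0)"
    by auto
  then show ?thesis by simp
qed

lemma dinv: "x \<in> X \<Longrightarrow> d (hu a c) e x = - (\<Sum>p\<in>UNIV. \<Sum>q\<in>UNIV. hu a p x * d (hl p q) e x * hu q c x)"
proof -
  assume x: "x \<in> X"
  have 0: "(\<Sum>m\<in>UNIV. hu a m x * d (hl m b) e x + d (hu a m) e x * hl m b x) = 0" for b
  proof -
    have "(\<Sum>m\<in>UNIV. hu a m x * d (hl m b) e x + d (hu a m) e x * hl m b x)
        = d (\<lambda>y. \<Sum>m\<in>UNIV. hu a m y * hl m b y) e x"
      using x by (simp add: d_rules sm_rules hu_sm hl_sm)
    also have "\<dots> = d (\<lambda>y. if a = b \<and> a \<in> sp then 1 else 0) e x"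
      by (rule d_cong[OF _ x]) (simp add: huhl)
    also have "\<dots> = 0" using x by (simp add: d_const)
    finally show ?thesis .
  qed
  have "(\<Sum>b\<in>UNIV. (\<Sum>m\<in>UNIV. hu a m x * d (hl m b) e x + d (hu a m) e x * hl m b x) * hu b c x) = 0"
    by (simp add: 0)
  also have "(\<Sum>b\<in>UNIV. (\<Sum>m\<in>UNIV. hu a m x * d (hl m b) e x + d (hu a m) e x * hl m b x) * hu b c x)
     = (\<Sum>b\<in>UNIV. \<Sum>m\<in>UNIV. hu a m x * d (hl m b) e x * hu b c x)
       + (\<Sum>b\<in>UNIV. \<Sum>m\<in>UNIV. d (hu a m) e x * (hl m b x * hu b c x))"
    by (simp add: sum_distrib_right sum_distrib_left sum.distrib[symmetric] algebra_simps)
  also have "(\<Sum>b\<in>UNIV. \<Sum>m\<in>UNIV. d (hu a m) e x * (hl m b x * hu b c x))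
     = (\<Sum>m\<in>UNIV. d (hu a m) e x * (\<Sum>b\<in>UNIV. hl m b x * hu b c x))"
    by (subst sum.swap) (simp add: sum_distrib_left)
  finally have 1: "(\<Sum>b\<in>UNIV. \<Sum>m\<in>UNIV. hu a m x * d (hl m b) e x * hu b c x)
      + (\<Sum>m\<in>UNIV. d (hu a m) e x * (\<Sum>b\<in>UNIV. hl m b x * hu b c x)) = 0" .
  have 2: "(\<Sum>m\<in>UNIV. d (hu a m) e x * (\<Sum>b\<in>UNIV. hl m b x * hu b c x)) = d (hu a c) e x"
    using x by (simp add: hlhu sum_delta dhu_out)
  have 3: "(\<Sum>b\<in>UNIV. \<Sum>m\<in>UNIV. hu a m x * d (hl m b) e x * hu b c x)
     = (\<Sum>p\<in>UNIV. \<Sum>q\<in>UNIV. hu a p x * d (hl p q) e x * hu q c x)"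
    by (rule sum.swap)
  show ?thesis using 1 2 3 by linarith
qed


lemma parL_par: "parL e \<Longrightarrow> par e"
  unfolding par_def
proof (intro ballI allI)
  fix x b c assume pl: "parL e" and x: "x \<in> X"
  have 1: "hu b p x * d (hl p q) e x * hu q c x =
      hu b p x * ((\<Sum>m\<in>UNIV. \<Gamma> e p m x * hl m q x) + (\<Sum>m\<in>UNIV. \<Gamma> e q m x * hl p m x)) * hu q c x" for p q
  proof (cases "p \<in> sp \<and> q \<in> sp")
    case True then show ?thesis using pl x unfolding parL_def by auto
  next
    case False then show ?thesis by (auto simp: hu_out)
  qed
  have 2: "(\<Sum>p\<in>UNIV. \<Sum>q\<in>UNIV. hu b p x * (\<Sum>m\<in>UNIV. \<Gamma> e p m x * hl m q x) * hu q c x)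
      = (\<Sum>p\<in>UNIV. hu b p x * (\<Sum>m\<in>UNIV. \<Gamma> e p m x * (\<Sum>q\<in>UNIV. hl m q x * hu q c x)))"
    by (simp add: sum_distrib_left sum_distrib_right algebra_simps) (subst (2) sum.swap, simp)
  have 3: "(\<Sum>p\<in>UNIV. \<Sum>q\<in>UNIV. hu b p x * (\<Sum>m\<in>UNIV. \<Gamma> e q m x * hl p m x) * hu q c x)
      = (\<Sum>q\<in>UNIV. hu q c x * (\<Sum>m\<in>UNIV. \<Gamma> e q m x * (\<Sum>p\<in>UNIV. hu b p x * hl p m x)))"
    apply (subst sum.swap)
    apply (simp add: sum_distrib_left sum_distrib_right algebra_simps)
    apply (subst (2) sum.swap, simp)
    done
  have 4: "(\<Sum>m\<in>UNIV. \<Gamma> e p m x * (\<Sum>q\<in>UNIV. hl m q x * hu q c x)) = \<Gamma> e p c x" for p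
    using x by (simp add: hlhu sum_delta \<Gamma>_out)
  have 5: "(\<Sum>m\<in>UNIV. \<Gamma> e q m x * (\<Sum>p\<in>UNIV. hu b p x * hl p m x)) = \<Gamma> e q b x" for q
    using x by (simp add: huhl sum_delta' \<Gamma>_out)
  have "d (hu b c) e x = - (\<Sum>p\<in>UNIV. \<Sum>q\<in>UNIV. hu b p x * ((\<Sum>m\<in>UNIV. \<Gamma> e p m x * hl m q x) + (\<Sum>m\<in>UNIV. \<Gamma> e q m x * hl p m x)) * hu q c x)"
    by (simp only: dinv[OF x] 1)
  also have "\<dots> = - (\<Sum>p\<in>UNIV. \<Sum>q\<in>UNIV. hu b p x * (\<Sum>m\<in>UNIV. \<Gamma> e p m x * hl m q x) * hu q c x)
     - (\<Sum>p\<in>UNIV. \<Sum>q\<in>UNIV. hu b p x * (\<Sum>m\<in>UNIV. \<Gamma> e q m x * hl p m x) * hu q c x)"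
    by (simp add: distrib_left distrib_right sum.distrib)
  also have "\<dots> = - (\<Sum>p\<in>UNIV. hu b p x * \<Gamma> e p c x) - (\<Sum>q\<in>UNIV. hu q c x * \<Gamma> e q b x)"
    unfolding 2 3 4 5 ..
  finally show "d (hu b c) e x = - (\<Sum>m\<in>UNIV. \<Gamma> e m b x * hu m c x) - (\<Sum>m\<in>UNIV. \<Gamma> e m c x * hu b m x)"
    by (simp add: mult.commute)
qed

lemma sumRH: "x \<in> X \<Longrightarrow> (\<Sum>m\<in>UNIV. Rm a b m c x * H m) =
   (\<Sum>m\<in>UNIV. d (\<Gamma> b m c) a x * H m) - (\<Sum>m\<in>UNIV. d (\<Gamma> a m c) b x * H m)
   + (\<Sum>m\<in>UNIV. \<Sum>p\<in>UNIV. \<Gamma> b m p x * \<Gamma> a p c x * (H m :: real))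
   - (\<Sum>m\<in>UNIV. \<Sum>p\<in>UNIV. \<Gamma> a m p x * \<Gamma> b p c x * H m)"
  unfolding Rm_def
  by (simp add: algebra_simps sum.distrib sum_subtractf sum_distrib_left sum_distrib_right)

lemma Eab: assumes pa: "par a" and pb: "par b" and x: "x \<in> X"
  shows "d (d (hu c dd) b) a x =
     - (\<Sum>m\<in>UNIV. d (\<Gamma> b m c) a x * hu m dd x) - (\<Sum>m\<in>UNIV. d (\<Gamma> b m dd) a x * hu c m x)
     + (\<Sum>n\<in>UNIV. \<Sum>m\<in>UNIV. \<Gamma> b m c x * \<Gamma> a n m x * hu n dd x)
     + (\<Sum>m\<in>UNIV. \<Sum>n\<in>UNIV. \<Gamma> b m c x * \<Gamma> a n dd x * hu m n x)
     + (\<Sum>n\<in>UNIV. \<Sum>m\<in>UNIV. \<Gamma> b m dd x * \<Gamma> a n c x * hu n m x)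
     + (\<Sum>n\<in>UNIV. \<Sum>m\<in>UNIV. \<Gamma> b m dd x * \<Gamma> a n m x * hu c n x)"
proof -
  have "d (d (hu c dd) b) a x = d (\<lambda>y. - (\<Sum>m\<in>UNIV. \<Gamma> b m c y * hu m dd y) - (\<Sum>m\<in>UNIV. \<Gamma> b m dd y * hu c m y)) a x"
    by (rule d_cong[OF _ x]) (use pb in \<open>simp add: par_def\<close>)
  also have "\<dots> = - (\<Sum>m\<in>UNIV. \<Gamma> b m c x * d (hu m dd) a x + d (\<Gamma> b m c) a x * hu m dd x)
       - (\<Sum>m\<in>UNIV. \<Gamma> b m dd x * d (hu c m) a x + d (\<Gamma> b m dd) a x * hu c m x)"
    using x by (simp add: d_rules sm_rules \<Gamma>_sm hu_sm)
  also have "\<dots> = - (\<Sum>m\<in>UNIV. \<Gamma> b m c x * (- (\<Sum>n\<in>UNIV. \<Gamma> a n m x * hu n dd x) - (\<Sum>n\<in>UNIV. \<Gamma> a n dd x * hu m n x))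
          + d (\<Gamma> b m c) a x * hu m dd x)
       - (\<Sum>m\<in>UNIV. \<Gamma> b m dd x * (- (\<Sum>n\<in>UNIV. \<Gamma> a n c x * hu n m x) - (\<Sum>n\<in>UNIV. \<Gamma> a n m x * hu c n x))
          + d (\<Gamma> b m dd) a x * hu c m x)"
    using pa x by (simp add: par_def)
  also have "\<dots> = - (\<Sum>m\<in>UNIV. d (\<Gamma> b m c) a x * hu m dd x) - (\<Sum>m\<in>UNIV. d (\<Gamma> b m dd) a x * hu c m x)
     + (\<Sum>m\<in>UNIV. \<Sum>n\<in>UNIV. \<Gamma> b m c x * \<Gamma> a n m x * hu n dd x)
     + (\<Sum>m\<in>UNIV. \<Sum>n\<in>UNIV. \<Gamma> b m c x * \<Gamma> a n dd x * hu m n x)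
     + (\<Sum>m\<in>UNIV. \<Sum>n\<in>UNIV. \<Gamma> b m dd x * \<Gamma> a n c x * hu n m x)
     + (\<Sum>m\<in>UNIV. \<Sum>n\<in>UNIV. \<Gamma> b m dd x * \<Gamma> a n m x * hu c n x)"
    by (simp add: sum.distrib sum_subtractf sum_distrib_left algebra_simps sum_negf)
  also have "\<dots> = - (\<Sum>m\<in>UNIV. d (\<Gamma> b m c) a x * hu m dd x) - (\<Sum>m\<in>UNIV. d (\<Gamma> b m dd) a x * hu c m x)
     + (\<Sum>n\<in>UNIV. \<Sum>m\<in>UNIV. \<Gamma> b m c x * \<Gamma> a n m x * hu n dd x)
     + (\<Sum>m\<in>UNIV. \<Sum>n\<in>UNIV. \<Gamma> b m c x * \<Gamma> a n dd x * hu m n x)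
     + (\<Sum>n\<in>UNIV. \<Sum>m\<in>UNIV. \<Gamma> b m dd x * \<Gamma> a n c x * hu n m x)
     + (\<Sum>n\<in>UNIV. \<Sum>m\<in>UNIV. \<Gamma> b m dd x * \<Gamma> a n m x * hu c n x)"
    by (simp only: sum.swap[of "\<lambda>m n. \<Gamma> b m c x * \<Gamma> a n m x * hu n dd x" UNIV UNIV]
        sum.swap[of "\<lambda>m n. \<Gamma> b m dd x * \<Gamma> a n c x * hu n m x" UNIV UNIV]
        sum.swap[of "\<lambda>m n. \<Gamma> b m dd x * \<Gamma> a n m x * hu c n x" UNIV UNIV])
  finally show ?thesis .
qed

lemma ri_hu: assumes pa: "par a" and pb: "par b" and x: "x \<in> X"
  shows "(\<Sum>m\<in>UNIV. Rm a b m c x * hu m dd x) + (\<Sum>m\<in>UNIV. Rm a b m dd x * hu c m x) = 0"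
proof -
  have "d (d (hu c dd) b) a x = d (d (hu c dd) a) b x" by (rule d_comm[OF hu_sm x])
  then show ?thesis
    unfolding Eab[OF pa pb x] Eab[OF pb pa x] sumRH[OF x]
    by (simp add: algebra_simps)
qed


lemma trace_free: assumes pa: "par a" and pb: "par b" and x: "x \<in> X"
  shows "(\<Sum>c\<in>UNIV. Rm a b c c x) = 0"
proof -
  define T where "T e m = (\<Sum>c\<in>UNIV. Rm a b c e x * hu c m x)" for e m
  have anti: "T e m = - T m e" for e m
  proof -
    have "(\<Sum>c\<in>UNIV. Rm a b c e x * hu c m x) + (\<Sum>c\<in>UNIV. Rm a b c m x * hu e c x) = 0"
      by (rule ri_hu[OF pa pb x])
    moreover have "(\<Sum>c\<in>UNIV. Rm a b c m x * hu e c x) = T m e"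
      unfolding T_def by (rule sum.cong) (simp_all add: hu_sym[OF x, of e])
    ultimately show ?thesis unfolding T_def by linarith
  qed
  have "(\<Sum>c\<in>UNIV. Rm a b c c x) = (\<Sum>c\<in>UNIV. \<Sum>e\<in>UNIV. Rm a b c e x * (if c = e \<and> c \<in> sp then 1 else 0))"
    using x by (simp add: sum_delta', intro sum.cong) (auto simp: Rm_out)
  also have "\<dots> = (\<Sum>c\<in>UNIV. \<Sum>e\<in>UNIV. Rm a b c e x * (\<Sum>m\<in>UNIV. hu c m x * hl m e x))"
    using x by (simp add: huhl)
  also have "\<dots> = (\<Sum>c\<in>UNIV. \<Sum>e\<in>UNIV. \<Sum>m\<in>UNIV. Rm a b c e x * hu c m x * hl m e x)"
    by (simp add: sum_distrib_left mult.assoc)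
  also have "\<dots> = (\<Sum>e\<in>UNIV. \<Sum>m\<in>UNIV. \<Sum>c\<in>UNIV. Rm a b c e x * hu c m x * hl m e x)"
    by (rule sum3_rot)
  also have "\<dots> = (\<Sum>e\<in>UNIV. \<Sum>m\<in>UNIV. T e m * hl m e x)"
    unfolding T_def by (simp add: sum_distrib_right)
  finally have 1: "(\<Sum>c\<in>UNIV. Rm a b c c x) = (\<Sum>e\<in>UNIV. \<Sum>m\<in>UNIV. T e m * hl m e x)" .
  have "(\<Sum>e\<in>UNIV. \<Sum>m\<in>UNIV. T e m * hl m e x) = (\<Sum>e\<in>UNIV. \<Sum>m\<in>UNIV. - (T m e * hl e m x))"
    by (intro sum.cong refl, subst anti) (simp add: hl_sym[OF x])
  also have "\<dots> = - (\<Sum>m\<in>UNIV. \<Sum>e\<in>UNIV. T m e * hl e m x)"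
    by (subst sum.swap) (simp add: sum_negf)
  finally have "(\<Sum>e\<in>UNIV. \<Sum>m\<in>UNIV. T e m * hl m e x) = 0" by simp
  with 1 show ?thesis by simp
qed

lemma Rc_sym: assumes pb: "par b" and pc: "par c" and x: "x \<in> X"
  shows "Rc b c x = Rc c b x"
proof -
  have "(\<Sum>q\<in>UNIV. Rm q b c q x + Rm b c q q x + Rm c q b q x) = 0"
    using bianchi1[OF x] by simp
  then have "Rc b c x + (\<Sum>q\<in>UNIV. Rm b c q q x) + (\<Sum>q\<in>UNIV. Rm c q b q x) = 0"
    unfolding Rc_def by (simp add: sum.distrib)
  then show ?thesis using trace_free[OF pb pc x] sumRm2[of c b x] by simp
qed

lemma leib2: assumes pa: "par a" and x: "x \<in> X" and T: "\<And>b c. sm (T b c)"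
  shows "d (\<lambda>y. \<Sum>b\<in>UNIV. \<Sum>c\<in>UNIV. hu b c y * T b c y) a x = (\<Sum>b\<in>UNIV. \<Sum>c\<in>UNIV. hu b c x * nab2 T a b c x)"
proof -
  have "d (\<lambda>y. \<Sum>b\<in>UNIV. \<Sum>c\<in>UNIV. hu b c y * T b c y) a x
      = (\<Sum>b\<in>UNIV. \<Sum>c\<in>UNIV. hu b c x * d (T b c) a x + d (hu b c) a x * T b c x)"
    using x T by (simp add: d_rules sm_rules hu_sm)
  also have "\<dots> = (\<Sum>b\<in>UNIV. \<Sum>c\<in>UNIV. hu b c x * d (T b c) a x)
      - (\<Sum>b\<in>UNIV. \<Sum>c\<in>UNIV. \<Sum>m\<in>UNIV. \<Gamma> a m b x * hu m c x * T b c x)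
      - (\<Sum>b\<in>UNIV. \<Sum>c\<in>UNIV. \<Sum>m\<in>UNIV. \<Gamma> a m c x * hu b m x * T b c x)"
    using pa x
    by (simp add: parD sum.distrib sum_subtractf sum_distrib_right sum_distrib_left algebra_simps)
  also have "(\<Sum>b\<in>UNIV. \<Sum>c\<in>UNIV. \<Sum>m\<in>UNIV. \<Gamma> a m b x * hu m c x * T b c x)
      = (\<Sum>m\<in>UNIV. \<Sum>c\<in>UNIV. \<Sum>b\<in>UNIV. \<Gamma> a m b x * hu m c x * T b c x)"
    by (rule sum3_rev)
  also have "(\<Sum>b\<in>UNIV. \<Sum>c\<in>UNIV. \<Sum>m\<in>UNIV. \<Gamma> a m c x * hu b m x * T b c x)
      = (\<Sum>b\<in>UNIV. \<Sum>m\<in>UNIV. \<Sum>c\<in>UNIV. \<Gamma> a m c x * hu b m x * T b c x)"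
    by (rule sum_swap_in)
  finally show ?thesis unfolding nab2_def
    by (simp add: sum_subtractf sum_distrib_left sum.distrib algebra_simps)
qed

lemma nab2_prod: assumes v: "\<And>b. sm (v b)" and w: "\<And>b. sm (w b)" and x: "x \<in> X"
  shows "nab2 (\<lambda>b c y. v b y * w c y) a b c x = nab1 v a b x * w c x + v b x * nab1 w a c x"
  unfolding nab2_def nab1_def using v w x
  by (simp add: d_rules algebra_simps sum_distrib_left sum_distrib_right)

lemma leib_vw: assumes pa: "par a" and x: "x \<in> X" and v: "\<And>b. sm (v b)" and w: "\<And>b. sm (w b)"
  shows "d (\<lambda>y. \<Sum>b\<in>UNIV. \<Sum>c\<in>UNIV. hu b c y * (v b y * w c y)) a x
     = (\<Sum>b\<in>UNIV. \<Sum>c\<in>UNIV. hu b c x * (nab1 v a b x * w c x + v b x * nab1 w a c x))"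
  using leib2[OF pa x, of "\<lambda>b c y. v b y * w c y"] v w x
  by (simp add: nab2_prod sm_mult)

lemma divraise: assumes pe: "\<And>e. par e" and x: "x \<in> X" and T: "\<And>b c. sm (T b c)"
  shows "div11 (\<lambda>a e y. \<Sum>c\<in>UNIV. hu e c y * T a c y) a x = (\<Sum>e\<in>UNIV. \<Sum>c\<in>UNIV. hu e c x * nab2 T e a c x)"
proof -
  have de: "d (\<lambda>y. \<Sum>c\<in>UNIV. hu e c y * T a c y) e x =
     (\<Sum>c\<in>UNIV. hu e c x * d (T a c) e x) - (\<Sum>c\<in>UNIV. \<Sum>m\<in>UNIV. \<Gamma> e m e x * hu m c x * T a c x)
     - (\<Sum>c\<in>UNIV. \<Sum>m\<in>UNIV. \<Gamma> e m c x * hu e m x * T a c x)" for e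
    using x T pe[of e]
    by (simp add: parD d_rules sm_rules hu_sm sum.distrib sum_subtractf sum_distrib_right sum_distrib_left algebra_simps)
  have 1: "(\<Sum>c\<in>UNIV. \<Sum>m\<in>UNIV. \<Gamma> e m e x * hu m c x * T a c x) = (\<Sum>m\<in>UNIV. \<Gamma> e m e x * (\<Sum>c\<in>UNIV. hu m c x * T a c x))" for e
    by (subst sum.swap) (simp add: sum_distrib_left mult.assoc)
  have 2: "(\<Sum>c\<in>UNIV. \<Sum>m\<in>UNIV. \<Gamma> e m c x * hu e m x * T a c x) = (\<Sum>c\<in>UNIV. hu e c x * (\<Sum>m\<in>UNIV. \<Gamma> e c m x * T a m x))" for e
    by (subst sum.swap) (simp add: sum_distrib_left algebra_simps)
  have 3: "(\<Sum>m\<in>UNIV. \<Gamma> e a m x * (\<Sum>c\<in>UNIV. hu e c x * T m c x)) = (\<Sum>c\<in>UNIV. hu e c x * (\<Sum>m\<in>UNIV. \<Gamma> e a m x * T m c x))" for e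
    by (simp add: sum_distrib_left algebra_simps) (rule sum.swap)
  show ?thesis unfolding div11_def nab2_def de 1 2 3
    by (simp add: sum_subtractf algebra_simps sum.distrib)
qed


definition Cm :: "'i \<Rightarrow> 'i \<Rightarrow> 'p \<Rightarrow> real" where
  "Cm a f = (\<lambda>y. \<Sum>b\<in>UNIV. \<Sum>c\<in>UNIV. hu b c y * Rm a b c f y)"

definition nab11 :: "('i \<Rightarrow> 'i \<Rightarrow> 'p \<Rightarrow> real) \<Rightarrow> 'i \<Rightarrow> 'i \<Rightarrow> 'i \<Rightarrow> 'p \<Rightarrow> real" where
  "nab11 Y e a f = (\<lambda>x. d (Y a f) e x - (\<Sum>m\<in>UNIV. \<Gamma> e a m x * Y m f x) + (\<Sum>m\<in>UNIV. \<Gamma> e m f x * Y a m x))"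

lemma div11_nab11: "div11 Y a x = (\<Sum>e\<in>UNIV. nab11 Y e a e x)"
  unfolding div11_def nab11_def ..

lemma div11_cong: "(\<And>a e y. y \<in> X \<Longrightarrow> Y a e y = Y' a e y) \<Longrightarrow> x \<in> X \<Longrightarrow> div11 Y a x = div11 Y' a x"
  unfolding div11_def by (simp add: d_cong[of "Y _ _" "Y' _ _"])

lemma C_eq: assumes pe: "\<And>e. par e" and x: "x \<in> X"
  shows "Cm a f x = (\<Sum>c\<in>UNIV. hu f c x * Rc a c x)"
proof -
  have 1: "(\<Sum>c\<in>UNIV. hu b c x * Rm a b c f x) = - (\<Sum>m\<in>UNIV. Rm a b m b x * hu f m x)" for b
  proof -
    have "(\<Sum>m\<in>UNIV. Rm a b m f x * hu m b x) + (\<Sum>m\<in>UNIV. Rm a b m b x * hu f m x) = 0"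
      by (rule ri_hu[OF pe pe x])
    moreover have "(\<Sum>c\<in>UNIV. hu b c x * Rm a b c f x) = (\<Sum>m\<in>UNIV. Rm a b m f x * hu m b x)"
      by (rule sum.cong) (simp_all add: hu_sym[OF x, of b] mult.commute)
    ultimately show ?thesis by linarith
  qed
  have "Cm a f x = - (\<Sum>b\<in>UNIV. \<Sum>m\<in>UNIV. Rm a b m b x * hu f m x)"
    unfolding Cm_def 1 by (simp add: sum_negf)
  also have "\<dots> = - (\<Sum>m\<in>UNIV. hu f m x * (\<Sum>b\<in>UNIV. Rm a b m b x))"
    by (subst sum.swap) (simp add: sum_distrib_left mult.commute)
  also have "\<dots> = (\<Sum>m\<in>UNIV. hu f m x * Rc a m x)"
    by (simp add: sumRm2 sum_negf)
  finally show ?thesis .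
qed

lemma Cm_sm[simp]: "sm (Cm a f)"
  unfolding Cm_def by (intro sm_rules hu_sm Rm_sm)

lemma leibR: assumes pe: "par e" and x: "x \<in> X"
  shows "(\<Sum>b\<in>UNIV. \<Sum>c\<in>UNIV. hu b c x * nabR e a b c f x) = nab11 Cm e a f x"
proof -
  have L: "(\<Sum>b\<in>UNIV. \<Sum>c\<in>UNIV. hu b c x * nabR e a b c f x) =
     (\<Sum>b\<in>UNIV. \<Sum>c\<in>UNIV. hu b c x * d (Rm a b c f) e x)
     - (\<Sum>b\<in>UNIV. \<Sum>c\<in>UNIV. \<Sum>m\<in>UNIV. hu b c x * \<Gamma> e a m x * Rm m b c f x)
     - (\<Sum>b\<in>UNIV. \<Sum>c\<in>UNIV. \<Sum>m\<in>UNIV. hu b c x * \<Gamma> e b m x * Rm a m c f x)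
     - (\<Sum>b\<in>UNIV. \<Sum>c\<in>UNIV. \<Sum>m\<in>UNIV. hu b c x * \<Gamma> e c m x * Rm a b m f x)
     + (\<Sum>b\<in>UNIV. \<Sum>c\<in>UNIV. \<Sum>m\<in>UNIV. hu b c x * \<Gamma> e m f x * Rm a b c m x)"
    unfolding nabR_def by (simp add: sum_subtractf sum.distrib sum_distrib_left algebra_simps)
  have R: "nab11 Cm e a f x =
     (\<Sum>b\<in>UNIV. \<Sum>c\<in>UNIV. hu b c x * d (Rm a b c f) e x)
     - (\<Sum>b\<in>UNIV. \<Sum>c\<in>UNIV. \<Sum>m\<in>UNIV. \<Gamma> e m b x * hu m c x * Rm a b c f x)
     - (\<Sum>b\<in>UNIV. \<Sum>c\<in>UNIV. \<Sum>m\<in>UNIV. \<Gamma> e m c x * hu b m x * Rm a b c f x)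
     - (\<Sum>m\<in>UNIV. \<Sum>b\<in>UNIV. \<Sum>c\<in>UNIV. \<Gamma> e a m x * hu b c x * Rm m b c f x)
     + (\<Sum>m\<in>UNIV. \<Sum>b\<in>UNIV. \<Sum>c\<in>UNIV. \<Gamma> e m f x * hu b c x * Rm a b c m x)"
    unfolding nab11_def Cm_def using x pe
    by (simp add: d_rules sm_rules hu_sm parD sum_subtractf sum.distrib sum_distrib_left sum_distrib_right algebra_simps)
  have e1: "(\<Sum>b\<in>UNIV. \<Sum>c\<in>UNIV. \<Sum>m\<in>UNIV. hu b c x * \<Gamma> e a m x * Rm m b c f x)
      = (\<Sum>m\<in>UNIV. \<Sum>b\<in>UNIV. \<Sum>c\<in>UNIV. \<Gamma> e a m x * hu b c x * Rm m b c f x)"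
    by (subst sum3_rotr) (simp add: mult_ac)
  have e2: "(\<Sum>b\<in>UNIV. \<Sum>c\<in>UNIV. \<Sum>m\<in>UNIV. hu b c x * \<Gamma> e m f x * Rm a b c m x)
      = (\<Sum>m\<in>UNIV. \<Sum>b\<in>UNIV. \<Sum>c\<in>UNIV. \<Gamma> e m f x * hu b c x * Rm a b c m x)"
    by (subst sum3_rotr) (simp add: mult_ac)
  have e3: "(\<Sum>b\<in>UNIV. \<Sum>c\<in>UNIV. \<Sum>m\<in>UNIV. hu b c x * \<Gamma> e b m x * Rm a m c f x)
      = (\<Sum>b\<in>UNIV. \<Sum>c\<in>UNIV. \<Sum>m\<in>UNIV. \<Gamma> e m b x * hu m c x * Rm a b c f x)"
    by (subst sum3_rev) (simp add: mult_ac)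
  have e4: "(\<Sum>b\<in>UNIV. \<Sum>c\<in>UNIV. \<Sum>m\<in>UNIV. hu b c x * \<Gamma> e c m x * Rm a b m f x)
      = (\<Sum>b\<in>UNIV. \<Sum>c\<in>UNIV. \<Sum>m\<in>UNIV. \<Gamma> e m c x * hu b m x * Rm a b c f x)"
    by (subst sum_swap_in) (simp add: mult_ac)
  show ?thesis using L R e1 e2 e3 e4 by linarith
qed

definition trRc :: "'p \<Rightarrow> real" where
  "trRc = (\<lambda>y. \<Sum>b\<in>UNIV. \<Sum>c\<in>UNIV. hu b c y * Rc b c y)"

lemma cb_h: assumes pe: "\<And>e. par e" and x: "x \<in> X"
  shows "2 * (\<Sum>e\<in>UNIV. \<Sum>c\<in>UNIV. hu e c x * nab2 Rc e a c x) = d trRc a x"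
proof -
  have 1: "(\<Sum>b\<in>UNIV. \<Sum>c\<in>UNIV. hu b c x * (\<Sum>e\<in>UNIV. nabR e a b c e x))
      = (\<Sum>b\<in>UNIV. \<Sum>c\<in>UNIV. hu b c x * nab2 Rc a b c x) - (\<Sum>b\<in>UNIV. \<Sum>c\<in>UNIV. hu b c x * nab2 Rc b a c x)"
    by (simp add: contracted_bianchi[OF x] algebra_simps sum_subtractf)
  have "(\<Sum>b\<in>UNIV. \<Sum>c\<in>UNIV. hu b c x * (\<Sum>e\<in>UNIV. nabR e a b c e x))
      = (\<Sum>b\<in>UNIV. \<Sum>c\<in>UNIV. \<Sum>e\<in>UNIV. hu b c x * nabR e a b c e x)"
    by (simp add: sum_distrib_left)
  also have "\<dots> = (\<Sum>e\<in>UNIV. \<Sum>b\<in>UNIV. \<Sum>c\<in>UNIV. hu b c x * nabR e a b c e x)"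
    by (rule sum3_rotr)
  also have "\<dots> = (\<Sum>e\<in>UNIV. nab11 Cm e a e x)"
    by (simp add: leibR[OF pe x])
  also have "\<dots> = div11 Cm a x" by (simp add: div11_nab11)
  also have "\<dots> = div11 (\<lambda>a e y. \<Sum>c\<in>UNIV. hu e c y * Rc a c y) a x"
    by (rule div11_cong[OF _ x]) (simp add: C_eq[OF pe])
  also have "\<dots> = (\<Sum>e\<in>UNIV. \<Sum>c\<in>UNIV. hu e c x * nab2 Rc e a c x)"
    by (rule divraise[OF pe x]) simp
  finally have 2: "(\<Sum>b\<in>UNIV. \<Sum>c\<in>UNIV. hu b c x * (\<Sum>e\<in>UNIV. nabR e a b c e x))
      = (\<Sum>e\<in>UNIV. \<Sum>c\<in>UNIV. hu e c x * nab2 Rc e a c x)" .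
  have 3: "(\<Sum>b\<in>UNIV. \<Sum>c\<in>UNIV. hu b c x * nab2 Rc a b c x) = d trRc a x"
    unfolding trRc_def by (rule leib2[OF pe x, symmetric]) simp
  show ?thesis using 1 2 3 by simp
qed

lemma lowering: assumes pl: "parL a" and i: "i \<in> sp" and w: "\<And>l. sm (w l)" and x: "x \<in> X"
  shows "(\<Sum>q\<in>UNIV. hl q i x * (d (\<lambda>y. \<Sum>l\<in>UNIV. hu q l y * w l y) a x
            + (\<Sum>m\<in>UNIV. (\<Sum>l\<in>UNIV. hu m l x * w l x) * \<Gamma> a m q x))) = nab1 w a i x"
proof -
  define Y where "Y q y = (\<Sum>l\<in>UNIV. hu q l y * w l y)" for q y
  have Ysm: "sm (Y q)" for q unfolding Y_def by (intro sm_rules hu_sm w)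
  have Yout: "q \<notin> sp \<Longrightarrow> Y q y = 0" for q y unfolding Y_def by (simp add: hu_out)
  have hY: "y \<in> X \<Longrightarrow> (\<Sum>q\<in>UNIV. hl q m y * Y q y) = (if m \<in> sp then w m y else 0)" for m y
  proof -
    assume y: "y \<in> X"
    have "(\<Sum>q\<in>UNIV. hl q m y * Y q y) = (\<Sum>l\<in>UNIV. w l y * (\<Sum>q\<in>UNIV. hl m q y * hu q l y))"
      unfolding Y_def by (simp add: sum_distrib_left sum_distrib_right hl_sym[OF y, of _ m] algebra_simps) (rule sum.swap)
    also have "\<dots> = (if m \<in> sp then w m y else 0)"
      using y by (simp add: hlhu sum_delta')
    finally show ?thesis .
  qed
  have 1: "(\<Sum>q\<in>UNIV. hl q i x * d (Y q) a x) = d (w i) a x - (\<Sum>q\<in>UNIV. d (hl q i) a x * Y q x)"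
  proof -
    have "d (\<lambda>y. \<Sum>q\<in>UNIV. hl q i y * Y q y) a x = (\<Sum>q\<in>UNIV. hl q i x * d (Y q) a x + d (hl q i) a x * Y q x)"
      using x by (simp add: d_rules sm_rules hl_sm Ysm)
    moreover have "d (\<lambda>y. \<Sum>q\<in>UNIV. hl q i y * Y q y) a x = d (w i) a x"
      by (rule d_cong[OF _ x]) (simp add: hY i)
    ultimately show ?thesis by (simp add: sum.distrib)
  qed
  have 2: "d (hl q i) a x * Y q x = (\<Sum>m\<in>UNIV. \<Gamma> a q m x * hl m i x) * Y q x + (\<Sum>m\<in>UNIV. \<Gamma> a i m x * hl q m x) * Y q x" for q
  proof (cases "q \<in> sp")
    case True then show ?thesis using pl x i unfolding parL_def by (simp add: algebra_simps)
  next
    case False then show ?thesis by (simp add: Yout)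
  qed
  have 3: "(\<Sum>q\<in>UNIV. (\<Sum>m\<in>UNIV. \<Gamma> a i m x * hl q m x) * Y q x) = (\<Sum>m\<in>UNIV. \<Gamma> a i m x * w m x)"
  proof -
    have "(\<Sum>q\<in>UNIV. (\<Sum>m\<in>UNIV. \<Gamma> a i m x * hl q m x) * Y q x) = (\<Sum>m\<in>UNIV. \<Gamma> a i m x * (\<Sum>q\<in>UNIV. hl q m x * Y q x))"
      by (simp add: sum_distrib_left sum_distrib_right algebra_simps) (rule sum.swap)
    also have "\<dots> = (\<Sum>m\<in>UNIV. \<Gamma> a i m x * w m x)"
      using x by (intro sum.cong) (auto simp: hY \<Gamma>_out)
    finally show ?thesis .
  qed
  have 4: "(\<Sum>q\<in>UNIV. (\<Sum>m\<in>UNIV. \<Gamma> a q m x * hl m i x) * Y q x) = (\<Sum>q\<in>UNIV. hl q i x * (\<Sum>m\<in>UNIV. Y m x * \<Gamma> a m q x))"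
    by (simp add: sum_distrib_left sum_distrib_right algebra_simps) (rule sum.swap)
  show ?thesis
    unfolding Y_def[symmetric] nab1_def
    using 1 3 4 by (simp add: 2 sum.distrib distrib_left)
qed

end

lemma (in tfc) nab2_cong: "(\<And>b c y. y \<in> X \<Longrightarrow> T b c y = T' b c y) \<Longrightarrow> x \<in> X \<Longrightarrow> nab2 T a b c x = nab2 T' a b c x"
  unfolding nab2_def by (simp add: d_cong[of "T _ _" "T' _ _"])

lemma (in tfc) nab2_diff: "(\<And>b c. sm (T b c)) \<Longrightarrow> (\<And>b c. sm (T' b c)) \<Longrightarrow> x \<in> X \<Longrightarrow>
  nab2 (\<lambda>b c y. T b c y - T' b c y) a b c x = nab2 T a b c x - nab2 T' a b c x"
  unfolding nab2_def by (simp add: d_diff sum_subtractf algebra_simps)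

locale rfl = tfcm X sm d \<Gamma> sp hu hl
  for X :: "'p set" and sm and d :: "('p \<Rightarrow> real) \<Rightarrow> 'i::finite \<Rightarrow> 'p \<Rightarrow> real" and \<Gamma> sp hu hl +
  fixes f \<phi> :: "'p \<Rightarrow> real" and t0 :: 'i
  assumes f_sm: "sm f" and \<phi>_sm: "sm \<phi>"
  and t0: "t0 \<notin> sp" and sp_all: "a \<notin> sp \<Longrightarrow> a = t0"
  and parL_all: "parL a"
  and \<Gamma>k0: "k \<in> sp \<Longrightarrow> x \<in> X \<Longrightarrow> \<Gamma> k t0 p x = (\<Sum>l\<in>UNIV. hu p l x * (Hs f k l x - Rc k l x))"
  and \<Gamma>00: "x \<in> X \<Longrightarrow> \<Gamma> t0 t0 p x = (\<Sum>l\<in>UNIV. hu p l x * d \<phi> l x)"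
  and \<phi>_eq: "x \<in> X \<Longrightarrow> \<phi> x = - (1/2) * trRc x + d f t0 x
        - (1/2) * (\<Sum>b\<in>UNIV. \<Sum>c\<in>UNIV. hu b c x * (d f b x * d f c x))"
begin

lemma par_all: "par a" by (rule parL_par[OF parL_all])

definition Alow :: "'i \<Rightarrow> 'i \<Rightarrow> 'p \<Rightarrow> real" where
  "Alow k l = (\<lambda>x. Hs f k l x - Rc k l x)"

definition S :: "'i \<Rightarrow> 'i \<Rightarrow> 'p \<Rightarrow> real" where
  "S k l = (\<lambda>x. Rc k l x - Hs f k l x)"

definition TT :: "'i \<Rightarrow> 'i \<Rightarrow> 'p \<Rightarrow> real" where
  "TT a c = (\<lambda>y. if a = t0 then d \<phi> c y else Alow a c y)"

definition Lap :: "'p \<Rightarrow> real" where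
  "Lap = (\<lambda>y. \<Sum>b\<in>UNIV. \<Sum>c\<in>UNIV. hu b c y * Hs f b c y)"

definition gs :: "'p \<Rightarrow> real" where
  "gs = (\<lambda>y. \<Sum>b\<in>UNIV. \<Sum>c\<in>UNIV. hu b c y * (d f b y * d f c y))"

lemma trRc_sm[simp]: "sm trRc" unfolding trRc_def by (intro sm_rules hu_sm Rc_sm)
lemma gs_sm[simp]: "sm gs" unfolding gs_def by (intro sm_rules hu_sm f_sm)
lemma Lap_sm[simp]: "sm Lap" unfolding Lap_def by (intro sm_rules hu_sm Hs_sm f_sm)

lemma Alow_sm[simp]: "sm (Alow k l)" unfolding Alow_def by (intro sm_rules Hs_sm f_sm Rc_sm)
lemma S_sm[simp]: "sm (S k l)" unfolding S_def by (intro sm_rules Hs_sm f_sm Rc_sm)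
lemma TT_sm[simp]: "sm (TT k l)" unfolding TT_def by (cases "k = t0") (simp_all add: sm_d \<phi>_sm)

lemma Alow_sym: "x \<in> X \<Longrightarrow> Alow k l x = Alow l k x"
  unfolding Alow_def by (simp add: Hs_sym[OF f_sm] Rc_sym[OF par_all par_all])

lemma S_sym: "x \<in> X \<Longrightarrow> S k l x = S l k x"
  unfolding S_def by (simp add: Hs_sym[OF f_sm] Rc_sym[OF par_all par_all])

lemma Y_eq: assumes x: "x \<in> X" shows "\<Gamma> a t0 p x = (\<Sum>c\<in>UNIV. hu p c x * TT a c x)"
proof (cases "a \<in> sp")
  case True then have "a \<noteq> t0" using t0 by auto
  with True x show ?thesis by (simp add: \<Gamma>k0 TT_def Alow_def)
next
  case False then have "a = t0" by (rule sp_all)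
  with x show ?thesis by (simp add: \<Gamma>00 TT_def)
qed

lemma nab2_TT: "k \<noteq> t0 \<Longrightarrow> x \<in> X \<Longrightarrow> nab2 TT e k c x = nab2 Alow e k c x"
proof -
  assume k: "k \<noteq> t0" and x: "x \<in> X"
  have "(\<Sum>m\<in>UNIV. \<Gamma> e k m x * TT m c x) = (\<Sum>m\<in>UNIV. \<Gamma> e k m x * Alow m c x)"
    by (rule sum.cong) (auto simp: TT_def \<Gamma>_out t0)
  then show ?thesis unfolding nab2_def using k by (simp add: TT_def)
qed

lemma dgs: "x \<in> X \<Longrightarrow> d gs a x = 2 * (\<Sum>b\<in>UNIV. \<Sum>c\<in>UNIV. hu b c x * (Hs f a c x * d f b x))"
proof -
  assume x: "x \<in> X"
  have "d gs a x = (\<Sum>b\<in>UNIV. \<Sum>c\<in>UNIV. hu b c x * (Hs f a b x * d f c x + d f b x * Hs f a c x))"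
    unfolding gs_def using leib_vw[OF par_all x, of "\<lambda>m. d f m" "\<lambda>m. d f m" a] f_sm
    by (simp add: Hs_def sm_d)
  also have "\<dots> = (\<Sum>b\<in>UNIV. \<Sum>c\<in>UNIV. hu b c x * (Hs f a b x * d f c x))
       + (\<Sum>b\<in>UNIV. \<Sum>c\<in>UNIV. hu b c x * (Hs f a c x * d f b x))"
    by (simp add: algebra_simps sum.distrib)
  also have "(\<Sum>b\<in>UNIV. \<Sum>c\<in>UNIV. hu b c x * (Hs f a b x * d f c x))
     = (\<Sum>b\<in>UNIV. \<Sum>c\<in>UNIV. hu b c x * (Hs f a c x * d f b x))"
    by (subst sum.swap) (simp add: hu_sym[OF x])
  finally show ?thesis by simp
qed

lemma S_k0: assumes k: "k \<in> sp" and x: "x \<in> X" shows "S k t0 x = - d \<phi> k x"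
proof -
  have kt: "k \<noteq> t0" using k t0 by auto
  have tr: "d (\<lambda>y. \<Sum>q\<in>UNIV. \<Gamma> q t0 q y) k x = d Lap k x - d trRc k x"
  proof -
    have "d (\<lambda>y. \<Sum>q\<in>UNIV. \<Gamma> q t0 q y) k x = d (\<lambda>y. Lap y - trRc y) k x"
    proof (rule d_cong[OF _ x])
      fix y assume y: "y \<in> X"
      have "(\<Sum>q\<in>UNIV. \<Gamma> q t0 q y) = (\<Sum>q\<in>UNIV. \<Sum>c\<in>UNIV. hu q c y * Alow q c y)"
      proof (rule sum.cong[OF refl])
        fix q :: 'i
        show "\<Gamma> q t0 q y = (\<Sum>c\<in>UNIV. hu q c y * Alow q c y)"
        proof (cases "q = t0")
          case True then show ?thesis by (simp add: \<Gamma>_out hu_out t0)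
        next
          case False then show ?thesis by (simp add: Y_eq[OF y] TT_def)
        qed
      qed
      then show "(\<Sum>q\<in>UNIV. \<Gamma> q t0 q y) = Lap y - trRc y"
        unfolding Lap_def trRc_def Alow_def by (simp add: algebra_simps sum_subtractf)
    qed
    also have "\<dots> = d Lap k x - d trRc k x"
      using x by (simp only: d_diff Lap_sm trRc_sm)
    finally show ?thesis .
  qed
  have dv: "div11 (\<lambda>a p. \<Gamma> a t0 p) k x = (\<Sum>e\<in>UNIV. \<Sum>c\<in>UNIV. hu e c x * nab2 Alow e k c x)"
  proof -
    have "div11 (\<lambda>a p. \<Gamma> a t0 p) k x = div11 (\<lambda>a e y. \<Sum>c\<in>UNIV. hu e c y * TT a c y) k x"
      by (rule div11_cong[OF _ x]) (simp add: Y_eq)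
    also have "\<dots> = (\<Sum>e\<in>UNIV. \<Sum>c\<in>UNIV. hu e c x * nab2 TT e k c x)"
      by (rule divraise[OF par_all x]) simp
    finally show ?thesis by (simp add: nab2_TT[OF kt x])
  qed
  have na: "nab2 Alow e k c x = nab2 (Hs f) e k c x - nab2 Rc e k c x" for e c
    unfolding Alow_def by (rule nab2_diff) (simp_all add: f_sm x)
  have ri: "nab2 (Hs f) e k c x = nab2 (Hs f) k e c x - (\<Sum>p\<in>UNIV. Rm e k c p x * d f p x)" for e c
    using ricci_identity1[of "\<lambda>m. d f m" x e k c] f_sm x by (simp add: Hs_def sm_d)
  have h1: "(\<Sum>e\<in>UNIV. \<Sum>c\<in>UNIV. hu e c x * nab2 (Hs f) k e c x) = d Lap k x"
    unfolding Lap_def by (rule leib2[OF par_all x, symmetric]) (simp add: f_sm)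
  have h2: "(\<Sum>e\<in>UNIV. \<Sum>c\<in>UNIV. hu e c x * (\<Sum>p\<in>UNIV. Rm e k c p x * d f p x))
      = - (\<Sum>p\<in>UNIV. (\<Sum>c\<in>UNIV. hu p c x * Rc k c x) * d f p x)"
  proof -
    have "(\<Sum>e\<in>UNIV. \<Sum>c\<in>UNIV. hu e c x * (\<Sum>p\<in>UNIV. Rm e k c p x * d f p x))
       = (\<Sum>e\<in>UNIV. \<Sum>c\<in>UNIV. \<Sum>p\<in>UNIV. hu e c x * Rm e k c p x * d f p x)"
      by (simp add: sum_distrib_left mult.assoc)
    also have "\<dots> = (\<Sum>p\<in>UNIV. \<Sum>e\<in>UNIV. \<Sum>c\<in>UNIV. hu e c x * Rm e k c p x * d f p x)"
      by (rule sum3_rotr)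
    also have "\<dots> = (\<Sum>p\<in>UNIV. - (Cm k p x * d f p x))"
      unfolding Cm_def by (subst Rm_anti) (simp add: sum_distrib_right sum_negf)
    also have "\<dots> = - (\<Sum>p\<in>UNIV. (\<Sum>c\<in>UNIV. hu p c x * Rc k c x) * d f p x)"
      by (simp add: C_eq[OF par_all x] sum_negf)
    finally show ?thesis .
  qed
  have cb: "2 * (\<Sum>e\<in>UNIV. \<Sum>c\<in>UNIV. hu e c x * nab2 Rc e k c x) = d trRc k x"
    by (rule cb_h[OF par_all x])
  have Rk0: "Rc k t0 x = (1/2) * d trRc k x + (\<Sum>p\<in>UNIV. (\<Sum>c\<in>UNIV. hu p c x * Rc k c x) * d f p x)"
  proof -
    have "(\<Sum>e\<in>UNIV. \<Sum>c\<in>UNIV. hu e c x * nab2 Alow e k c x)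
      = (\<Sum>e\<in>UNIV. \<Sum>c\<in>UNIV. hu e c x * nab2 (Hs f) k e c x)
        - (\<Sum>e\<in>UNIV. \<Sum>c\<in>UNIV. hu e c x * (\<Sum>p\<in>UNIV. Rm e k c p x * d f p x))
        - (\<Sum>e\<in>UNIV. \<Sum>c\<in>UNIV. hu e c x * nab2 Rc e k c x)"
      by (simp add: na ri algebra_simps sum_subtractf sum.distrib)
    then show ?thesis
      using Rc_div[OF x, of k t0] dv tr h1 h2 cb by simp
  qed
  have Hk0: "Hs f k t0 x = d (d f t0) k x - (\<Sum>m\<in>UNIV. (\<Sum>l\<in>UNIV. hu m l x * (Hs f k l x - Rc k l x)) * d f m x)"
  proof -
    have "Hs f k t0 x = d (d f t0) k x - (\<Sum>m\<in>UNIV. \<Gamma> k t0 m x * d f m x)"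
      by (simp add: Hs_def nab1_def)
    then show ?thesis using \<Gamma>k0[OF k x] by simp
  qed
  have ph: "d \<phi> k x = - (1/2) * d trRc k x + d (d f t0) k x - (1/2) * d gs k x"
  proof -
    have "d \<phi> k x = d (\<lambda>y. - (1/2) * trRc y + d f t0 y - (1/2) * gs y) k x"
      by (rule d_cong[OF _ x]) (simp add: \<phi>_eq gs_def)
    also have "\<dots> = - (1/2) * d trRc k x + d (d f t0) k x - (1/2) * d gs k x"
      using x by (simp only: d_diff d_add d_cmult sm_rules trRc_sm gs_sm f_sm)
    finally show ?thesis .
  qed
  have e1: "(\<Sum>m\<in>UNIV. (\<Sum>l\<in>UNIV. hu m l x * (Hs f k l x - Rc k l x)) * d f m x)
     = (\<Sum>b\<in>UNIV. \<Sum>c\<in>UNIV. hu b c x * (Hs f k c x * d f b x))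
       - (\<Sum>p\<in>UNIV. (\<Sum>c\<in>UNIV. hu p c x * Rc k c x) * d f p x)"
    by (simp add: sum_distrib_right sum_distrib_left sum_subtractf algebra_simps)
  show ?thesis unfolding S_def using Rk0 Hk0 ph e1 dgs[OF x, of k] by simp
qed


lemma dtrY: assumes x: "x \<in> X" shows "d (\<lambda>y. \<Sum>q\<in>UNIV. \<Gamma> q t0 q y) a x = d Lap a x - d trRc a x"
proof -
  have "d (\<lambda>y. \<Sum>q\<in>UNIV. \<Gamma> q t0 q y) a x = d (\<lambda>y. Lap y - trRc y) a x"
  proof (rule d_cong[OF _ x])
    fix y assume y: "y \<in> X"
    have "(\<Sum>q\<in>UNIV. \<Gamma> q t0 q y) = (\<Sum>q\<in>UNIV. \<Sum>c\<in>UNIV. hu q c y * Alow q c y)"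
    proof (rule sum.cong[OF refl])
      fix q :: 'i
      show "\<Gamma> q t0 q y = (\<Sum>c\<in>UNIV. hu q c y * Alow q c y)"
      proof (cases "q = t0")
        case True then show ?thesis by (simp add: \<Gamma>_out hu_out t0)
      next
        case False then show ?thesis by (simp add: Y_eq[OF y] TT_def)
      qed
    qed
    then show "(\<Sum>q\<in>UNIV. \<Gamma> q t0 q y) = Lap y - trRc y"
      unfolding Lap_def trRc_def Alow_def by (simp add: algebra_simps sum_subtractf)
  qed
  also have "\<dots> = d Lap a x - d trRc a x"
    using x by (simp only: d_diff Lap_sm trRc_sm)
  finally show ?thesis .
qed

lemma dphi: assumes x: "x \<in> X" shows "d \<phi> a x = - (1/2) * d trRc a x + d (d f t0) a x - (1/2) * d gs a x"
proof -
  have "d \<phi> a x = d (\<lambda>y. - (1/2) * trRc y + d f t0 y - (1/2) * gs y) a x"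
    by (rule d_cong[OF _ x]) (simp add: \<phi>_eq gs_def)
  also have "\<dots> = - (1/2) * d trRc a x + d (d f t0) a x - (1/2) * d gs a x"
    using x by (simp only: d_diff d_add d_cmult sm_rules trRc_sm gs_sm f_sm)
  finally show ?thesis .
qed

lemma hsum: assumes x: "x \<in> X"
  shows "(\<Sum>e\<in>UNIV. \<Sum>c\<in>UNIV. hu e c x * nab2 (Hs f) e a c x)
     = d Lap a x + (\<Sum>p\<in>UNIV. (\<Sum>c\<in>UNIV. hu p c x * Rc a c x) * d f p x)"
proof -
  have ri: "nab2 (Hs f) e a c x = nab2 (Hs f) a e c x - (\<Sum>p\<in>UNIV. Rm e a c p x * d f p x)" for e c
    using ricci_identity1[of "\<lambda>m. d f m" x e a c] f_sm x by (simp add: Hs_def sm_d)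
  have h1: "(\<Sum>e\<in>UNIV. \<Sum>c\<in>UNIV. hu e c x * nab2 (Hs f) a e c x) = d Lap a x"
    unfolding Lap_def by (rule leib2[OF par_all x, symmetric]) (simp add: f_sm)
  have h2: "(\<Sum>e\<in>UNIV. \<Sum>c\<in>UNIV. hu e c x * (\<Sum>p\<in>UNIV. Rm e a c p x * d f p x))
      = - (\<Sum>p\<in>UNIV. (\<Sum>c\<in>UNIV. hu p c x * Rc a c x) * d f p x)"
  proof -
    have "(\<Sum>e\<in>UNIV. \<Sum>c\<in>UNIV. hu e c x * (\<Sum>p\<in>UNIV. Rm e a c p x * d f p x))
       = (\<Sum>e\<in>UNIV. \<Sum>c\<in>UNIV. \<Sum>p\<in>UNIV. hu e c x * Rm e a c p x * d f p x)"
      by (simp add: sum_distrib_left mult.assoc)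
    also have "\<dots> = (\<Sum>p\<in>UNIV. \<Sum>e\<in>UNIV. \<Sum>c\<in>UNIV. hu e c x * Rm e a c p x * d f p x)"
      by (rule sum3_rotr)
    also have "\<dots> = (\<Sum>p\<in>UNIV. - (Cm a p x * d f p x))"
      unfolding Cm_def by (subst Rm_anti) (simp add: sum_distrib_right sum_negf)
    also have "\<dots> = - (\<Sum>p\<in>UNIV. (\<Sum>c\<in>UNIV. hu p c x * Rc a c x) * d f p x)"
      by (simp add: C_eq[OF par_all x] sum_negf)
    finally show ?thesis .
  qed
  show ?thesis using h1 h2 by (simp add: ri algebra_simps sum_subtractf sum.distrib)
qed

lemma S_t0k: "k \<in> sp \<Longrightarrow> x \<in> X \<Longrightarrow> S t0 k x = - d \<phi> k x"
  using S_k0 S_sym by metis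

lemma S_00: assumes x: "x \<in> X" shows "S t0 t0 x = - d \<phi> t0 x"
proof -
  define AA where "AA = (\<Sum>e\<in>UNIV. \<Sum>c\<in>UNIV. hu e c x * (\<Sum>m\<in>UNIV. \<Gamma> e t0 m x * Alow m c x))"
  define Lp where "Lp = (\<Sum>e\<in>UNIV. \<Sum>c\<in>UNIV. hu e c x * Hs \<phi> e c x)"
  define G where "G = (\<Sum>p\<in>UNIV. (\<Sum>c\<in>UNIV. hu p c x * d \<phi> c x) * d f p x)"
  have nT: "nab2 TT e t0 c x = Hs \<phi> e c x - (\<Sum>m\<in>UNIV. \<Gamma> e t0 m x * Alow m c x)" for e c
  proof -
    have "(\<Sum>m\<in>UNIV. \<Gamma> e t0 m x * TT m c x) = (\<Sum>m\<in>UNIV. \<Gamma> e t0 m x * Alow m c x)"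
      by (rule sum.cong) (auto simp: TT_def \<Gamma>_out t0)
    then show ?thesis unfolding nab2_def Hs_def nab1_def TT_def by simp
  qed
  have dv: "div11 (\<lambda>a p. \<Gamma> a t0 p) t0 x = Lp - AA"
  proof -
    have "div11 (\<lambda>a p. \<Gamma> a t0 p) t0 x = div11 (\<lambda>a e y. \<Sum>c\<in>UNIV. hu e c y * TT a c y) t0 x"
      by (rule div11_cong[OF _ x]) (simp add: Y_eq)
    also have "\<dots> = (\<Sum>e\<in>UNIV. \<Sum>c\<in>UNIV. hu e c x * nab2 TT e t0 c x)"
      by (rule divraise[OF par_all x]) simp
    finally show ?thesis unfolding nT Lp_def AA_def by (simp add: algebra_simps sum_subtractf)
  qed
  have R00: "Rc t0 t0 x = Lp - AA - d Lap t0 x + d trRc t0 x"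
    using Rc_div[OF x, of t0 t0] dv dtrY[OF x, of t0] by simp
  have nS: "hu e c x * nab2 S e t0 c x = hu e c x * (- Hs \<phi> e c x + (\<Sum>m\<in>UNIV. \<Gamma> e t0 m x * Alow m c x))" for e c
  proof (cases "c \<in> sp")
    case False then show ?thesis by (simp add: hu_out)
  next
    case c: True
    have 1: "d (S t0 c) e x = - d (d \<phi> c) e x"
    proof -
      have "d (S t0 c) e x = d (\<lambda>y. - d \<phi> c y) e x"
        by (rule d_cong[OF _ x]) (simp add: S_t0k[OF c])
      then show ?thesis using x by (simp add: d_uminus sm_d \<phi>_sm)
    qed
    have 2: "(\<Sum>m\<in>UNIV. \<Gamma> e c m x * S t0 m x) = - (\<Sum>m\<in>UNIV. \<Gamma> e c m x * d \<phi> m x)"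
    proof -
      have "\<Gamma> e c m x * S t0 m x = - (\<Gamma> e c m x * d \<phi> m x)" for m
        by (cases "m \<in> sp") (simp_all add: \<Gamma>_out S_t0k x)
      then show ?thesis by (simp add: sum_negf)
    qed
    have 3: "(\<Sum>m\<in>UNIV. \<Gamma> e t0 m x * S m c x) = - (\<Sum>m\<in>UNIV. \<Gamma> e t0 m x * Alow m c x)"
      by (simp add: sum_negf[symmetric] S_def Alow_def algebra_simps)
    show ?thesis unfolding nab2_def Hs_def nab1_def using 1 2 3 by simp
  qed
  have sS: "(\<Sum>e\<in>UNIV. \<Sum>c\<in>UNIV. hu e c x * nab2 S e t0 c x) = - Lp + AA"
    unfolding nS Lp_def AA_def by (simp add: algebra_simps sum_subtractf sum.distrib)
  have nR: "nab2 Rc e t0 c x = nab2 S e t0 c x + nab2 (Hs f) e t0 c x" for e c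
  proof -
    have "nab2 S e t0 c x = nab2 Rc e t0 c x - nab2 (Hs f) e t0 c x"
      unfolding S_def by (rule nab2_diff) (simp_all add: f_sm x)
    then show ?thesis by simp
  qed
  have cb: "2 * (\<Sum>e\<in>UNIV. \<Sum>c\<in>UNIV. hu e c x * nab2 Rc e t0 c x) = d trRc t0 x"
    by (rule cb_h[OF par_all x])
  have sR: "(\<Sum>e\<in>UNIV. \<Sum>c\<in>UNIV. hu e c x * nab2 Rc e t0 c x) =
      (\<Sum>e\<in>UNIV. \<Sum>c\<in>UNIV. hu e c x * nab2 S e t0 c x) + (\<Sum>e\<in>UNIV. \<Sum>c\<in>UNIV. hu e c x * nab2 (Hs f) e t0 c x)"
    by (simp add: nR algebra_simps sum.distrib)
  have rc: "hu p c x * Rc t0 c x = hu p c x * (- d \<phi> c x + Hs f t0 c x)" for p c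
  proof (cases "c \<in> sp")
    case False then show ?thesis by (simp add: hu_out)
  next
    case True
    have "Rc t0 c x = S t0 c x + Hs f t0 c x" by (simp add: S_def)
    then show ?thesis using S_t0k[OF True x] by simp
  qed
  have rcs: "(\<Sum>p\<in>UNIV. (\<Sum>c\<in>UNIV. hu p c x * Rc t0 c x) * d f p x)
     = - G + (\<Sum>b\<in>UNIV. \<Sum>c\<in>UNIV. hu b c x * (Hs f t0 c x * d f b x))"
    unfolding G_def rc by (simp add: algebra_simps sum_distrib_right sum_distrib_left sum.distrib sum_subtractf)
  have H00: "Hs f t0 t0 x = d (d f t0) t0 x - G"
  proof -
    have "Hs f t0 t0 x = d (d f t0) t0 x - (\<Sum>m\<in>UNIV. \<Gamma> t0 t0 m x * d f m x)"
      by (simp add: Hs_def nab1_def)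
    then show ?thesis unfolding G_def using \<Gamma>00[OF x] by simp
  qed
  show ?thesis
    using R00 H00 sS cb sR hsum[OF x, of t0] rcs dphi[OF x, of t0] dgs[OF x, of t0]
    unfolding S_def by linarith
qed


lemma S_Alow: "S m c x = - Alow m c x" unfolding S_def Alow_def by simp

lemma dS_t0: assumes c: "c \<in> sp" and x: "x \<in> X" shows "d (S t0 c) e x = - d (d \<phi> c) e x"
proof -
  have "d (S t0 c) e x = d (\<lambda>y. - d \<phi> c y) e x"
    by (rule d_cong[OF _ x]) (simp add: S_t0k[OF c])
  then show ?thesis using x by (simp add: d_uminus sm_d \<phi>_sm)
qed

lemma GS_t0: assumes x: "x \<in> X" shows "(\<Sum>m\<in>UNIV. \<Gamma> a b m x * S t0 m x) = - (\<Sum>m\<in>UNIV. \<Gamma> a b m x * d \<phi> m x)"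
proof -
  have "\<Gamma> a b m x * S t0 m x = - (\<Gamma> a b m x * d \<phi> m x)" for m
    by (cases "m \<in> sp") (simp_all add: \<Gamma>_out S_t0k x)
  then show ?thesis by (simp add: sum_negf)
qed

lemma GS_m0: assumes x: "x \<in> X" shows "(\<Sum>m\<in>UNIV. \<Gamma> a b m x * S m t0 x) = - (\<Sum>m\<in>UNIV. \<Gamma> a b m x * d \<phi> m x)"
  using GS_t0[OF x, of a b] by (simp add: S_sym[OF x, of _ t0])

lemma LowY: assumes i: "i \<in> sp" and x: "x \<in> X"
  shows "(\<Sum>q\<in>UNIV. hl q i x * (d (\<Gamma> j t0 q) a x + (\<Sum>m\<in>UNIV. \<Gamma> j t0 m x * \<Gamma> a m q x))) = nab1 (TT j) a i x"
proof -
  have 1: "d (\<Gamma> j t0 q) a x = d (\<lambda>y. \<Sum>l\<in>UNIV. hu q l y * TT j l y) a x" for q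
    by (rule d_cong[OF _ x]) (simp add: Y_eq)
  show ?thesis unfolding 1 Y_eq[OF x]
    by (rule lowering[OF parL_all i _ x]) simp
qed

lemma YA_sym: assumes i: "i \<in> sp" and k: "k \<in> sp" and x: "x \<in> X"
  shows "(\<Sum>m\<in>UNIV. \<Gamma> i t0 m x * Alow k m x) = (\<Sum>m\<in>UNIV. \<Gamma> k t0 m x * Alow i m x)"
proof -
  have ti: "i \<noteq> t0" "k \<noteq> t0" using i k t0 by auto
  have "(\<Sum>m\<in>UNIV. \<Gamma> i t0 m x * Alow k m x) = (\<Sum>m\<in>UNIV. \<Sum>l\<in>UNIV. hu m l x * Alow i l x * Alow k m x)"
    by (simp add: Y_eq[OF x] TT_def ti sum_distrib_right)
  also have "\<dots> = (\<Sum>m\<in>UNIV. \<Sum>l\<in>UNIV. hu l m x * Alow i m x * Alow k l x)"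
    by (rule sum.swap)
  also have "\<dots> = (\<Sum>m\<in>UNIV. \<Gamma> k t0 m x * Alow i m x)"
    by (simp add: Y_eq[OF x] TT_def ti sum_distrib_right sum_distrib_left hu_sym[OF x] algebra_simps)
  finally show ?thesis .
qed

lemma Y0_sym: assumes k: "k \<in> sp" and x: "x \<in> X"
  shows "(\<Sum>m\<in>UNIV. \<Gamma> t0 t0 m x * Alow m k x) = (\<Sum>m\<in>UNIV. \<Gamma> k t0 m x * d \<phi> m x)"
proof -
  have ti: "k \<noteq> t0" using k t0 by auto
  have "(\<Sum>m\<in>UNIV. \<Gamma> t0 t0 m x * Alow m k x) = (\<Sum>m\<in>UNIV. \<Sum>l\<in>UNIV. hu m l x * d \<phi> l x * Alow m k x)"
    by (simp add: \<Gamma>00[OF x] sum_distrib_right)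
  also have "\<dots> = (\<Sum>m\<in>UNIV. \<Sum>l\<in>UNIV. hu l m x * d \<phi> m x * Alow l k x)"
    by (rule sum.swap)
  also have "\<dots> = (\<Sum>m\<in>UNIV. \<Gamma> k t0 m x * d \<phi> m x)"
    by (simp add: Y_eq[OF x] TT_def ti sum_distrib_right sum_distrib_left hu_sym[OF x] Alow_sym[OF x, of _ k] algebra_simps)
  finally show ?thesis .
qed

lemma Rm_split: "Rm a b c q x = (d (\<Gamma> b c q) a x + (\<Sum>m\<in>UNIV. \<Gamma> b c m x * \<Gamma> a m q x))
    - (d (\<Gamma> a c q) b x + (\<Sum>m\<in>UNIV. \<Gamma> a c m x * \<Gamma> b m q x))"
  unfolding Rm_def by (simp add: sum_subtractf)

lemma lowR: assumes i: "i \<in> sp" and x: "x \<in> X"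
  shows "(\<Sum>q\<in>UNIV. hl q i x * Rm a b t0 q x) = nab1 (TT b) a i x - nab1 (TT a) b i x"
proof -
  have "(\<Sum>q\<in>UNIV. hl q i x * Rm a b t0 q x) =
     (\<Sum>q\<in>UNIV. hl q i x * (d (\<Gamma> b t0 q) a x + (\<Sum>m\<in>UNIV. \<Gamma> b t0 m x * \<Gamma> a m q x)))
   - (\<Sum>q\<in>UNIV. hl q i x * (d (\<Gamma> a t0 q) b x + (\<Sum>m\<in>UNIV. \<Gamma> a t0 m x * \<Gamma> b m q x)))"
    unfolding Rm_split by (simp add: right_diff_distrib sum_subtractf)
  then show ?thesis by (simp add: LowY[OF i x])
qed

theorem identity1: assumes i: "i \<in> sp" and j: "j \<in> sp" and k: "k \<in> sp" and x: "x \<in> X"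
  shows "nab2 S j k i x = nab2 S k j i x + (\<Sum>q\<in>UNIV. hl q i x * Rm k j t0 q x)"
proof -
  have tj: "j \<noteq> t0" "k \<noteq> t0" using j k t0 by auto
  have TTj: "TT j = Alow j" "TT k = Alow k" unfolding TT_def using tj by auto
  show ?thesis
    unfolding lowR[OF i x] TTj nab2_def nab1_def S_Alow
    by (simp add: sum_negf \<Gamma>_sym[OF x, of k j] d_uminus[OF Alow_sm x] algebra_simps)
qed


lemma TT_t0: "TT t0 c = d \<phi> c" unfolding TT_def by simp
lemma TT_sp: "i \<in> sp \<Longrightarrow> TT i c = Alow i c" unfolding TT_def using t0 by auto

lemma dphi_comm: "x \<in> X \<Longrightarrow> d (d \<phi> a) b x = d (d \<phi> b) a x"
  by (rule d_comm[OF \<phi>_sm])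

lemma dAlow_sym: "x \<in> X \<Longrightarrow> d (Alow k i) e x = d (Alow i k) e x"
  by (rule d_cong) (simp_all add: Alow_sym)

lemma sumG_sym: "x \<in> X \<Longrightarrow> (\<Sum>m\<in>UNIV. \<Gamma> a b m x * F m) = (\<Sum>m\<in>UNIV. \<Gamma> b a m x * F m)"
  by (rule sum.cong) (simp_all add: \<Gamma>_sym)

lemma sumA_sym: "x \<in> X \<Longrightarrow> (\<Sum>m\<in>UNIV. F m * Alow m k x) = (\<Sum>m\<in>UNIV. F m * Alow k m x)"
  by (rule sum.cong) (simp_all add: Alow_sym)

theorem identity2: assumes i: "i \<in> sp" and k: "k \<in> sp" and x: "x \<in> X"
  shows "nab2 S t0 k i x = nab2 S k t0 i x + (\<Sum>q\<in>UNIV. hl q k x * Rm i t0 t0 q x)"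
proof -
  have L1: "nab2 S t0 k i x = - d (Alow k i) t0 x + (\<Sum>m\<in>UNIV. \<Gamma> t0 k m x * Alow m i x)
      + (\<Sum>m\<in>UNIV. \<Gamma> t0 i m x * Alow k m x)"
    unfolding nab2_def S_Alow using x by (simp add: d_uminus sum_negf)
  have L2: "nab2 S k t0 i x = - d (d \<phi> i) k x + (\<Sum>m\<in>UNIV. \<Gamma> k t0 m x * Alow m i x)
      + (\<Sum>m\<in>UNIV. \<Gamma> k i m x * d \<phi> m x)"
    unfolding nab2_def GS_t0[OF x] dS_t0[OF i x] using x by (simp add: S_Alow sum_negf)
  have R: "(\<Sum>q\<in>UNIV. hl q k x * Rm i t0 t0 q x) = (d (d \<phi> k) i x - (\<Sum>m\<in>UNIV. \<Gamma> i k m x * d \<phi> m x))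
      - (d (Alow i k) t0 x - (\<Sum>m\<in>UNIV. \<Gamma> t0 k m x * Alow i m x))"
    unfolding lowR[OF k x] nab1_def TT_t0 TT_sp[OF i] ..
  have f1: "(\<Sum>m\<in>UNIV. \<Gamma> t0 k m x * Alow m i x) = (\<Sum>m\<in>UNIV. \<Gamma> k t0 m x * Alow m i x)"
    by (rule sumG_sym[OF x])
  have f2: "(\<Sum>m\<in>UNIV. \<Gamma> t0 i m x * Alow k m x) = (\<Sum>m\<in>UNIV. \<Gamma> t0 k m x * Alow i m x)"
    using YA_sym[OF i k x] sumG_sym[OF x, of t0 i] sumG_sym[OF x, of t0 k] by simp
  have f3: "d (d \<phi> i) k x = d (d \<phi> k) i x" by (rule dphi_comm[OF x])
  have f4: "(\<Sum>m\<in>UNIV. \<Gamma> k i m x * d \<phi> m x) = (\<Sum>m\<in>UNIV. \<Gamma> i k m x * d \<phi> m x)"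
    by (rule sumG_sym[OF x])
  have f5: "d (Alow k i) t0 x = d (Alow i k) t0 x" by (rule dAlow_sym[OF x])
  show ?thesis using L1 L2 R f1 f2 f3 f4 f5 by linarith
qed

theorem identity3: assumes j: "j \<in> sp" and k: "k \<in> sp" and x: "x \<in> X"
  shows "nab2 S j t0 k x = nab2 S k t0 j x"
proof -
  have L: "nab2 S a t0 b x = - d (d \<phi> b) a x + (\<Sum>m\<in>UNIV. \<Gamma> a t0 m x * Alow m b x)
      + (\<Sum>m\<in>UNIV. \<Gamma> a b m x * d \<phi> m x)" if "b \<in> sp" for a b
    unfolding nab2_def GS_t0[OF x] dS_t0[OF that x] using x by (simp add: S_Alow sum_negf)
  have f1: "(\<Sum>m\<in>UNIV. \<Gamma> j t0 m x * Alow m k x) = (\<Sum>m\<in>UNIV. \<Gamma> k t0 m x * Alow m j x)"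
    using YA_sym[OF j k x] sumA_sym[OF x, of "\<lambda>m. \<Gamma> j t0 m x" k] sumA_sym[OF x, of "\<lambda>m. \<Gamma> k t0 m x" j]
    by simp
  show ?thesis using L[OF k, of j] L[OF j, of k] f1 dphi_comm[OF x, of k j] sumG_sym[OF x, of j k "\<lambda>m. d \<phi> m x"]
    by linarith
qed

theorem identity4: assumes k: "k \<in> sp" and x: "x \<in> X"
  shows "nab2 S t0 t0 k x = nab2 S k t0 t0 x"
proof -
  have L: "nab2 S t0 t0 k x = - d (d \<phi> k) t0 x + (\<Sum>m\<in>UNIV. \<Gamma> t0 t0 m x * Alow m k x)
      + (\<Sum>m\<in>UNIV. \<Gamma> t0 k m x * d \<phi> m x)"
    unfolding nab2_def GS_t0[OF x] dS_t0[OF k x] using x by (simp add: S_Alow sum_negf)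
  have dS: "d (S t0 t0) k x = - d (d \<phi> t0) k x"
  proof -
    have "d (S t0 t0) k x = d (\<lambda>y. - d \<phi> t0 y) k x"
      by (rule d_cong[OF _ x]) (simp add: S_00)
    then show ?thesis using x by (simp add: d_uminus sm_d \<phi>_sm)
  qed
  have R: "nab2 S k t0 t0 x = - d (d \<phi> t0) k x + (\<Sum>m\<in>UNIV. \<Gamma> k t0 m x * d \<phi> m x)
      + (\<Sum>m\<in>UNIV. \<Gamma> k t0 m x * d \<phi> m x)"
    unfolding nab2_def using x by (simp add: dS GS_t0[OF x] GS_m0[OF x])
  show ?thesis using L R Y0_sym[OF k x] dphi_comm[OF x, of k t0] sumG_sym[OF x, of t0 k "\<lambda>m. d \<phi> m x"]
    by linarith
qed

end



lemma box_dirs: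
  fixes U :: "(real^'n::finite) set" and T :: real
  assumes U: "open U" and x: "x \<in> U \<times> {0..<T}" and i: "i \<in> Basis" and e: "e > 0"
  shows "\<exists>d. 0 < \<bar>d\<bar> \<and> \<bar>d\<bar> < e \<and> x + d *\<^sub>R i \<in> U \<times> {0..<T}"
proof -
  obtain y t where xe: "x = (y, t)" by (cases x)
  have y: "y \<in> U" and t: "0 \<le> t" "t < T" using x xe by auto
  from i have "i \<in> (\<lambda>u. (u, 0)) ` Basis \<or> i \<in> (\<lambda>v. (0, v)) ` Basis"
    unfolding Basis_prod_def by auto
  then show ?thesis
  proof
    assume "i \<in> (\<lambda>u. (u, 0)) ` Basis"
    then obtain u where u: "u \<in> (Basis :: (real^'n) set)" and iu: "i = (u, 0)" by auto
    obtain r where r: "r > 0" "ball y r \<subseteq> U" using U y open_contains_ball by blast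
    define d where "d = min e r / 2"
    have d: "0 < d" "d < e" "d < r" using r e by (auto simp: d_def)
    have "y + d *\<^sub>R u \<in> ball y r" using d u by (simp add: dist_norm)
    then have "y + d *\<^sub>R u \<in> U" using r by auto
    then have "x + d *\<^sub>R i \<in> U \<times> {0..<T}" using xe iu t by simp
    then show ?thesis using d by (intro exI[of _ d]) auto
  next
    assume "i \<in> (\<lambda>v. (0, v)) ` Basis"
    then have iu: "i = (0, 1)" by auto
    define d where "d = min e (T - t) / 2"
    have d: "0 < d" "d < e" "t + d < T" using t e unfolding d_def by (auto simp: min_def field_simps)
    have "x + d *\<^sub>R i \<in> U \<times> {0..<T}" using xe iu t d y by simp
    then show ?thesis using d by (intro exI[of _ d]) auto
  qed
qed

lemma box_uniq:
  fixes U :: "(real^'n::finite) set" and T :: real and F :: "'n pt \<Rightarrow> real"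
  assumes U: "open U" and x: "x \<in> U \<times> {0..<T}"
    and 1: "(F has_derivative F1) (at x within U \<times> {0..<T})"
    and 2: "(F has_derivative F2) (at x within U \<times> {0..<T})"
  shows "F1 = F2"
  by (rule frechet_derivative_unique_within[OF 1 2 box_dirs[OF U x]])

lemma pd_eq:
  fixes U :: "(real^'n::finite) set" and T :: real and F :: "'n pt \<Rightarrow> real"
  assumes U: "open U" and x: "x \<in> U \<times> {0..<T}"
    and 1: "(F has_derivative F1) (at x within U \<times> {0..<T})"
  shows "pd (U \<times> {0..<T}) F a x = F1 (dirv a)"
proof -
  have "F differentiable (at x within U \<times> {0..<T})" using 1 by (auto simp: differentiable_def)
  then have "(F has_derivative frechet_derivative F (at x within U \<times> {0..<T})) (at x within U \<times> {0..<T})"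
    by (rule frechet_derivative_works[THEN iffD1])
  then have "frechet_derivative F (at x within U \<times> {0..<T}) = F1"
    by (rule box_uniq[OF U x _ 1])
  then show ?thesis unfolding pd_def by simp
qed

lemma pd_works:
  fixes U :: "(real^'n::finite) set" and T :: real and F :: "'n pt \<Rightarrow> real"
  assumes "F differentiable (at x within U \<times> {0..<T})"
  shows "(F has_derivative (\<lambda>h. frechet_derivative F (at x within U \<times> {0..<T}) h)) (at x within U \<times> {0..<T})"
  using assms frechet_derivative_works by auto

lemma hd_cong:
  assumes "(F has_derivative F') (at x within E)" "x \<in> E" "\<And>y. y \<in> E \<Longrightarrow> F y = G y"
  shows "(G has_derivative F') (at x within E)"
  by (rule has_derivative_transform_within[OF assms(1) zero_less_one assms(2)]) (use assms(3) in auto)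

lemma pd_cong:
  assumes "\<And>y. y \<in> E \<Longrightarrow> F y = G y" and "x \<in> E"
  shows "pd E F a x = pd E G a x"
proof -
  have "(F has_derivative h) (at x within E) \<longleftrightarrow> (G has_derivative h) (at x within E)" for h
    using hd_cong[of F h x E G] hd_cong[of G h x E F] assms by auto
  then show ?thesis unfolding pd_def frechet_derivative_def by simp
qed

lemma diff_cong:
  assumes "\<And>y. y \<in> E \<Longrightarrow> F y = G y" and "x \<in> E" and "F differentiable (at x within E)"
  shows "G differentiable (at x within E)"
  using assms hd_cong[of F _ x E G] unfolding differentiable_def by blast


lemma Ck_cong: "(\<And>y. y \<in> E \<Longrightarrow> F y = G y) \<Longrightarrow> Ck k E F \<Longrightarrow> Ck k E G"
proof (induction k arbitrary: F G)
  case 0 then show ?case using continuous_on_cong[of E E F G] by simp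
next
  case (Suc k)
  have d: "\<forall>p\<in>E. G differentiable (at p within E)"
    using Suc.prems diff_cong[of E F G] by auto
  have "Ck k E (pd E G a)" for a
    using Suc.IH[of "pd E F a" "pd E G a"] Suc.prems pd_cong[of E F G _ a] by auto
  with d show ?case by simp
qed

lemma Ck_Suc_D: "Ck (Suc k) E F \<Longrightarrow> Ck k E F"
proof (induction k arbitrary: F)
  case 0
  then have "\<forall>p\<in>E. F differentiable (at p within E)" by simp
  then show ?case
    by (simp add: continuous_on_eq_continuous_within differentiable_imp_continuous_within)
next
  case (Suc k)
  then show ?case by simp
qed

lemma Ck_le: "k \<le> m \<Longrightarrow> Ck m E F \<Longrightarrow> Ck k E F"
proof (induction m)
  case 0 then show ?case by simp
next
  case (Suc m)
  show ?case
  proof (cases "k = Suc m")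
    case True then show ?thesis using Suc.prems by simp
  next
    case False then show ?thesis using Suc.prems Suc.IH Ck_Suc_D[of m E F] by simp
  qed
qed

lemma Ck_diff: "Ck (Suc k) E F \<Longrightarrow> p \<in> E \<Longrightarrow> F differentiable (at p within E)"
  unfolding Ck.simps by blast
lemma Ck_pd: "Ck (Suc k) E F \<Longrightarrow> Ck k E (pd E F a)"
  unfolding Ck.simps by blast
lemma CkI: "(\<And>p. p \<in> E \<Longrightarrow> F differentiable (at p within E)) \<Longrightarrow> (\<And>a. Ck k E (pd E F a)) \<Longrightarrow> Ck (Suc k) E F"
  unfolding Ck.simps by blast

locale box =
  fixes U :: "(real^'n::finite) set" and T :: real
  assumes U_open: "open U"
begin

abbreviation "E \<equiv> U \<times> {0..<T}"

lemma pdE: "x \<in> E \<Longrightarrow> (F has_derivative F1) (at x within E) \<Longrightarrow> pd E F a x = F1 (dirv a)"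
  by (rule pd_eq[OF U_open])

lemma fdw: "F differentiable (at x within E) \<Longrightarrow> (F has_derivative frechet_derivative F (at x within E)) (at x within E)"
  using frechet_derivative_works by blast

lemma pd_const: "x \<in> E \<Longrightarrow> pd E (\<lambda>y. c) a x = 0"
  using pdE[of x "\<lambda>y. c" "\<lambda>h. 0"] by simp

lemma pd_add: assumes x: "x \<in> E" and F: "F differentiable (at x within E)" and G: "G differentiable (at x within E)"
  shows "pd E (\<lambda>y. F y + G y) a x = pd E F a x + pd E G a x"
  using pdE[OF x has_derivative_add[OF fdw[OF F] fdw[OF G]]] by (simp add: pd_def)

lemma pd_mult: assumes x: "x \<in> E" and F: "F differentiable (at x within E)" and G: "G differentiable (at x within E)"
  shows "pd E (\<lambda>y. F y * G y) a x = F x * pd E G a x + pd E F a x * G x"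
  using pdE[OF x has_derivative_mult[OF fdw[OF F] fdw[OF G]]] by (simp add: pd_def)

lemma pd_inverse: assumes x: "x \<in> E" and F: "F differentiable (at x within E)" and nz: "F x \<noteq> 0"
  shows "pd E (\<lambda>y. inverse (F y)) a x = - (inverse (F x) * pd E F a x * inverse (F x))"
  using pdE[OF x Deriv.has_derivative_inverse[OF nz fdw[OF F]]] by (simp add: pd_def)

lemma Ck_const: "Ck k E (\<lambda>y. c)"
proof (induction k arbitrary: c)
  case 0 then show ?case by simp
next
  case (Suc k)
  have "Ck k E (pd E (\<lambda>y. c) a)" for a
    by (rule Ck_cong[OF _ Suc.IH[of 0, simplified]]) (simp add: pd_const)
  then show ?case by (intro CkI) auto
qed

lemma Ck_add: "Ck k E F \<Longrightarrow> Ck k E G \<Longrightarrow> Ck k E (\<lambda>y. F y + G y)"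
proof (induction k arbitrary: F G)
  case 0 then show ?case by (simp add: continuous_on_add)
next
  case (Suc k)
  note dF = Ck_diff[OF Suc.prems(1)] and dG = Ck_diff[OF Suc.prems(2)]
  have "Ck k E (pd E (\<lambda>y. F y + G y) a)" for a
    by (rule Ck_cong[OF _ Suc.IH[OF Ck_pd[OF Suc.prems(1)] Ck_pd[OF Suc.prems(2)]]])
       (simp add: pd_add dF dG)
  then show ?case by (intro CkI) (auto simp: dF dG)
qed

lemma Ck_mult: "Ck k E F \<Longrightarrow> Ck k E G \<Longrightarrow> Ck k E (\<lambda>y. F y * G y)"
proof (induction k arbitrary: F G)
  case 0 then show ?case by (simp add: continuous_on_mult)
next
  case (Suc k)
  note dF = Ck_diff[OF Suc.prems(1)] and dG = Ck_diff[OF Suc.prems(2)]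
  have F: "Ck k E F" and G: "Ck k E G" using Suc.prems Ck_Suc_D by blast+
  have "Ck k E (pd E (\<lambda>y. F y * G y) a)" for a
  proof (rule Ck_cong)
    show "Ck k E (\<lambda>y. F y * pd E G a y + pd E F a y * G y)"
      by (intro Ck_add Suc.IH F G Ck_pd[OF Suc.prems(1)] Ck_pd[OF Suc.prems(2)])
  qed (simp add: pd_mult dF dG)
  then show ?case by (intro CkI) (auto simp: dF dG)
qed

lemma Ck_inverse: "Ck k E F \<Longrightarrow> (\<And>y. y \<in> E \<Longrightarrow> F y \<noteq> 0) \<Longrightarrow> Ck k E (\<lambda>y. inverse (F y))"
proof (induction k arbitrary: F)
  case 0 then show ?case by (simp add: continuous_on_inverse)
next
  case (Suc k)
  note dF = Ck_diff[OF Suc.prems(1)]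
  have F: "Ck k E F" using Suc.prems Ck_Suc_D by blast
  have I: "Ck k E (\<lambda>y. inverse (F y))" using Suc.IH[OF F] Suc.prems(2) by blast
  have "Ck k E (pd E (\<lambda>y. inverse (F y)) a)" for a
  proof (rule Ck_cong)
    have "Ck k E (\<lambda>y. (-1) * (inverse (F y) * pd E F a y * inverse (F y)))"
      by (intro Ck_mult Ck_const I Ck_pd[OF Suc.prems(1)])
    then show "Ck k E (\<lambda>y. - (inverse (F y) * pd E F a y * inverse (F y)))" by simp
  qed (simp add: pd_inverse dF Suc.prems(2))
  moreover have "\<And>p. p \<in> E \<Longrightarrow> (\<lambda>y. inverse (F y)) differentiable (at p within E)"
    using dF Suc.prems(2) by (simp add: differentiable_inverse)
  ultimately show ?case by (intro CkI) auto
qed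


lemma sm_Ck: "smooth_fun E F \<Longrightarrow> Ck k E F" unfolding smooth_fun_def by blast
lemma sm_diffble: "smooth_fun E F \<Longrightarrow> x \<in> E \<Longrightarrow> F differentiable (at x within E)"
  using Ck_diff[OF sm_Ck[of F "Suc 0"]] by simp
lemma sm_const: "smooth_fun E (\<lambda>y. c)" unfolding smooth_fun_def by (simp add: Ck_const)
lemma sm_add: "smooth_fun E F \<Longrightarrow> smooth_fun E G \<Longrightarrow> smooth_fun E (\<lambda>y. F y + G y)"
  unfolding smooth_fun_def by (simp add: Ck_add)
lemma sm_mult: "smooth_fun E F \<Longrightarrow> smooth_fun E G \<Longrightarrow> smooth_fun E (\<lambda>y. F y * G y)"
  unfolding smooth_fun_def by (simp add: Ck_mult)
lemma sm_pd: "smooth_fun E F \<Longrightarrow> smooth_fun E (pd E F a)"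
  unfolding smooth_fun_def using Ck_pd by blast
lemma sm_inverse: "smooth_fun E F \<Longrightarrow> (\<And>y. y \<in> E \<Longrightarrow> F y \<noteq> 0) \<Longrightarrow> smooth_fun E (\<lambda>y. inverse (F y))"
  unfolding smooth_fun_def by (simp add: Ck_inverse)
lemma sm_cong: "(\<And>y. y \<in> E \<Longrightarrow> F y = G y) \<Longrightarrow> smooth_fun E F \<Longrightarrow> smooth_fun E G"
  unfolding smooth_fun_def using Ck_cong by blast
lemma sm_sum: "(\<And>i. i \<in> A \<Longrightarrow> smooth_fun E (F i)) \<Longrightarrow> smooth_fun E (\<lambda>y. \<Sum>i\<in>A. F i y)"
proof (induction A rule: infinite_finite_induct)
  case (infinite A) then show ?case by (simp add: sm_const)
next
  case empty then show ?case by (simp add: sm_const)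
next
  case (insert a A) then show ?case by (simp add: sm_add)
qed
lemma sm_prod: "(\<And>i. i \<in> A \<Longrightarrow> smooth_fun E (F i)) \<Longrightarrow> smooth_fun E (\<lambda>y. \<Prod>i\<in>A. F i y)"
proof (induction A rule: infinite_finite_induct)
  case (infinite A) then show ?case by (simp add: sm_const)
next
  case empty then show ?case by (simp add: sm_const)
next
  case (insert a A) then show ?case by (simp add: sm_mult)
qed

definition I :: "'n pt set" where "I = U \<times> {0<..<T}"

lemma I_open: "open I" unfolding I_def by (intro open_Times U_open open_greaterThanLessThan)
lemma I_sub: "I \<subseteq> E" unfolding I_def by auto
lemma at_I: "p \<in> I \<Longrightarrow> at p within E = at p"
  by (rule at_within_interior) (rule interiorI[OF I_open _ I_sub])

lemma norm_dirv: "norm (dirv a :: 'n pt) = 1"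
  by (cases a) (simp_all add: dirv_def norm_Pair)

lemma line_DERIV:
  assumes dG: "G differentiable (at (y + t *\<^sub>R w) within E)" and p: "y + t *\<^sub>R w \<in> I"
  shows "((\<lambda>t. G (y + t *\<^sub>R w)) has_real_derivative frechet_derivative G (at (y + t *\<^sub>R w) within E) w) (at t)"
proof -
  define G' where "G' = frechet_derivative G (at (y + t *\<^sub>R w) within E)"
  have 1: "(G has_derivative G') (at (y + t *\<^sub>R w))"
    using fdw[OF dG] at_I[OF p] unfolding G'_def by simp
  have lin: "bounded_linear G'" using 1 has_derivative_bounded_linear by blast
  have 2: "((\<lambda>t. y + t *\<^sub>R w) has_derivative (\<lambda>h. h *\<^sub>R w)) (at t)"
    by (auto intro!: derivative_eq_intros)
  have "((\<lambda>t. G (y + t *\<^sub>R w)) has_derivative (\<lambda>h. G' (h *\<^sub>R w))) (at t)"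
    using has_derivative_compose[OF 2 1] by simp
  then show ?thesis unfolding G'_def[symmetric]
    by (rule has_derivative_imp_has_field_derivative) (simp add: linear.scaleR[OF bounded_linear.linear[OF lin]])
qed

lemma schwarz_core:
  assumes F: "smooth_fun E F" and s: "s > 0"
    and ball: "\<And>\<sigma> \<rho>. 0 \<le> \<sigma> \<Longrightarrow> \<sigma> \<le> s \<Longrightarrow> 0 \<le> \<rho> \<Longrightarrow> \<rho> \<le> s \<Longrightarrow> x + \<sigma> *\<^sub>R dirv a + \<rho> *\<^sub>R dirv b \<in> I"
  shows "\<exists>\<xi> \<eta>. 0 \<le> \<xi> \<and> \<xi> \<le> s \<and> 0 \<le> \<eta> \<and> \<eta> \<le> s \<and>
     F (x + s *\<^sub>R dirv a + s *\<^sub>R dirv b) - F (x + s *\<^sub>R dirv a + 0 *\<^sub>R dirv b)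
       - F (x + 0 *\<^sub>R dirv a + s *\<^sub>R dirv b) + F (x + 0 *\<^sub>R dirv a + 0 *\<^sub>R dirv b)
       = s * s * pd E (pd E F a) b (x + \<xi> *\<^sub>R dirv a + \<eta> *\<^sub>R dirv b)"
proof -
  define u v where "u = (dirv a :: 'n pt)" and "v = (dirv b :: 'n pt)"
  define P where "P \<sigma> \<rho> = x + \<sigma> *\<^sub>R u + \<rho> *\<^sub>R v" for \<sigma> \<rho>
  have inE: "p \<in> I \<Longrightarrow> p \<in> E" for p using I_sub by auto
  have dF: "p \<in> I \<Longrightarrow> F differentiable (at p within E)" for p using sm_diffble[OF F] inE by blast
  have dGa: "p \<in> I \<Longrightarrow> pd E F a differentiable (at p within E)" for p using sm_diffble[OF sm_pd[OF F]] inE by blast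
  have B: "0 \<le> \<sigma> \<Longrightarrow> \<sigma> \<le> s \<Longrightarrow> 0 \<le> \<rho> \<Longrightarrow> \<rho> \<le> s \<Longrightarrow> P \<sigma> \<rho> \<in> I" for \<sigma> \<rho>
    using ball unfolding u_def v_def P_def by blast
  have Pu: "P \<sigma> \<rho> = (x + \<rho> *\<^sub>R v) + \<sigma> *\<^sub>R u" for \<sigma> \<rho> unfolding P_def by (simp add: algebra_simps)
  have Pv: "P \<sigma> \<rho> = (x + \<sigma> *\<^sub>R u) + \<rho> *\<^sub>R v" for \<sigma> \<rho> unfolding P_def by simp
  define f1 where "f1 \<sigma> = F (P \<sigma> s) - F (P \<sigma> 0)" for \<sigma>
  define f1' where "f1' \<sigma> = pd E F a (P \<sigma> s) - pd E F a (P \<sigma> 0)" for \<sigma>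
  have D1: "DERIV f1 \<sigma> :> f1' \<sigma>" if "0 \<le> \<sigma>" "\<sigma> \<le> s" for \<sigma>
  proof -
    have p1: "(x + s *\<^sub>R v) + \<sigma> *\<^sub>R u \<in> I" using B[of \<sigma> s] that s unfolding Pu by simp
    have p2: "(x + 0 *\<^sub>R v) + \<sigma> *\<^sub>R u \<in> I" using B[of \<sigma> 0] that s unfolding Pu by simp
    have "DERIV (\<lambda>\<sigma>. F ((x + s *\<^sub>R v) + \<sigma> *\<^sub>R u) - F ((x + 0 *\<^sub>R v) + \<sigma> *\<^sub>R u)) \<sigma> :>
       (frechet_derivative F (at ((x + s *\<^sub>R v) + \<sigma> *\<^sub>R u) within E) u - frechet_derivative F (at ((x + 0 *\<^sub>R v) + \<sigma> *\<^sub>R u) within E) u)"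
      by (intro DERIV_diff line_DERIV dF p1 p2)
    then show ?thesis unfolding f1_def f1'_def Pu pd_def u_def .
  qed
  obtain \<xi> where \<xi>: "0 < \<xi>" "\<xi> < s" and m1: "f1 s - f1 0 = (s - 0) * f1' \<xi>"
    using MVT2[OF s D1] by blast
  define f2 where "f2 \<rho> = pd E F a (P \<xi> \<rho>)" for \<rho>
  have D2: "DERIV f2 \<rho> :> pd E (pd E F a) b (P \<xi> \<rho>)" if "0 \<le> \<rho>" "\<rho> \<le> s" for \<rho>
  proof -
    have p: "(x + \<xi> *\<^sub>R u) + \<rho> *\<^sub>R v \<in> I" using B[of \<xi> \<rho>] that \<xi> unfolding Pv by simp
    show ?thesis using line_DERIV[OF dGa[OF p] p] unfolding f2_def Pv pd_def v_def .
  qed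
  obtain \<eta> where \<eta>: "0 < \<eta>" "\<eta> < s" and m2: "f2 s - f2 0 = (s - 0) * pd E (pd E F a) b (P \<xi> \<eta>)"
    using MVT2[OF s D2] by blast
  have "F (P s s) - F (P s 0) - F (P 0 s) + F (P 0 0) = s * s * pd E (pd E F a) b (P \<xi> \<eta>)"
    using m1 m2 unfolding f1_def f1'_def f2_def by (simp add: algebra_simps)
  then show ?thesis using \<xi> \<eta> unfolding P_def u_def v_def by (intro exI[of _ \<xi>] exI[of _ \<eta>]) auto
qed


lemma sm_cont: "smooth_fun E F \<Longrightarrow> continuous_on E F"
  using sm_Ck[of F 0] by simp

lemma pd_comm_I:
  assumes F: "smooth_fun E F" and x: "x \<in> I"
  shows "pd E (pd E F a) b x = pd E (pd E F b) a x"
proof (rule ccontr)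
  define Fab where "Fab = pd E (pd E F a) b"
  define Fba where "Fba = pd E (pd E F b) a"
  assume ne: "pd E (pd E F a) b x \<noteq> pd E (pd E F b) a x"
  define e where "e = \<bar>Fab x - Fba x\<bar>"
  have e: "e > 0" using ne unfolding e_def Fab_def Fba_def by simp
  have xE: "x \<in> E" using x I_sub by auto
  have cab: "continuous_on E Fab" unfolding Fab_def by (intro sm_cont sm_pd F)
  have cba: "continuous_on E Fba" unfolding Fba_def by (intro sm_cont sm_pd F)
  obtain d1 where d1: "d1 > 0" "\<And>p. p \<in> E \<Longrightarrow> dist p x < d1 \<Longrightarrow> dist (Fab p) (Fab x) < e/2"
    using cab xE e unfolding continuous_on_iff by (metis half_gt_zero)
  obtain d2 where d2: "d2 > 0" "\<And>p. p \<in> E \<Longrightarrow> dist p x < d2 \<Longrightarrow> dist (Fba p) (Fba x) < e/2"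
    using cba xE e unfolding continuous_on_iff by (metis half_gt_zero)
  obtain r where r: "r > 0" "ball x r \<subseteq> I" using I_open x open_contains_ball by blast
  define s where "s = min r (min d1 d2) / 4"
  have s: "s > 0" "2 * s < r" "2 * s < d1" "2 * s < d2" using r d1 d2 unfolding s_def by auto
  have near: "dist (x + \<sigma> *\<^sub>R dirv c + \<rho> *\<^sub>R dirv c') x \<le> 2 * s"
    if "0 \<le> \<sigma>" "\<sigma> \<le> s" "0 \<le> \<rho>" "\<rho> \<le> s" for \<sigma> \<rho> c c'
  proof -
    have "dist (x + \<sigma> *\<^sub>R dirv c + \<rho> *\<^sub>R dirv c') x = norm (\<sigma> *\<^sub>R (dirv c :: 'n pt) + \<rho> *\<^sub>R dirv c')"
      by (simp add: dist_norm)
    also have "\<dots> \<le> norm (\<sigma> *\<^sub>R (dirv c :: 'n pt)) + norm (\<rho> *\<^sub>R (dirv c' :: 'n pt))" by (rule norm_triangle_ineq)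
    also have "\<dots> = \<sigma> + \<rho>" using that by (simp add: norm_dirv)
    finally show ?thesis using that by simp
  qed
  have inI: "x + \<sigma> *\<^sub>R dirv c + \<rho> *\<^sub>R dirv c' \<in> I"
    if "0 \<le> \<sigma>" "\<sigma> \<le> s" "0 \<le> \<rho>" "\<rho> \<le> s" for \<sigma> \<rho> c c'
    using near[OF that, of c c'] s r by (intro subsetD[OF r(2)]) (simp add: dist_commute)
  obtain \<xi> \<eta> where xe: "0 \<le> \<xi>" "\<xi> \<le> s" "0 \<le> \<eta>" "\<eta> \<le> s" and
    A: "F (x + s *\<^sub>R dirv a + s *\<^sub>R dirv b) - F (x + s *\<^sub>R dirv a + 0 *\<^sub>R dirv b)
       - F (x + 0 *\<^sub>R dirv a + s *\<^sub>R dirv b) + F (x + 0 *\<^sub>R dirv a + 0 *\<^sub>R dirv b)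
       = s * s * Fab (x + \<xi> *\<^sub>R dirv a + \<eta> *\<^sub>R dirv b)"
    using schwarz_core[OF F s(1) inI] unfolding Fab_def by blast
  obtain \<xi>' \<eta>' where xe': "0 \<le> \<xi>'" "\<xi>' \<le> s" "0 \<le> \<eta>'" "\<eta>' \<le> s" and
    B: "F (x + s *\<^sub>R dirv b + s *\<^sub>R dirv a) - F (x + s *\<^sub>R dirv b + 0 *\<^sub>R dirv a)
       - F (x + 0 *\<^sub>R dirv b + s *\<^sub>R dirv a) + F (x + 0 *\<^sub>R dirv b + 0 *\<^sub>R dirv a)
       = s * s * Fba (x + \<xi>' *\<^sub>R dirv b + \<eta>' *\<^sub>R dirv a)"
    using schwarz_core[OF F s(1) inI, of b a] unfolding Fba_def by blast
  have comm: "x + s *\<^sub>R dirv b + s *\<^sub>R dirv a = x + s *\<^sub>R dirv a + (s *\<^sub>R dirv b :: 'n pt)"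
    by (simp add: algebra_simps)
  have A': "F (x + s *\<^sub>R dirv a + s *\<^sub>R dirv b) - F (x + s *\<^sub>R dirv a) - F (x + s *\<^sub>R dirv b) + F x
      = s * s * Fab (x + \<xi> *\<^sub>R dirv a + \<eta> *\<^sub>R dirv b)" using A by simp
  have B': "F (x + s *\<^sub>R dirv a + s *\<^sub>R dirv b) - F (x + s *\<^sub>R dirv b) - F (x + s *\<^sub>R dirv a) + F x
      = s * s * Fba (x + \<xi>' *\<^sub>R dirv b + \<eta>' *\<^sub>R dirv a)" using B comm by simp
  have "s * s * Fab (x + \<xi> *\<^sub>R dirv a + \<eta> *\<^sub>R dirv b) = s * s * Fba (x + \<xi>' *\<^sub>R dirv b + \<eta>' *\<^sub>R dirv a)"
    using A' B' by linarith
  then have eq: "Fab (x + \<xi> *\<^sub>R dirv a + \<eta> *\<^sub>R dirv b) = Fba (x + \<xi>' *\<^sub>R dirv b + \<eta>' *\<^sub>R dirv a)"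
    using s(1) by simp
  have p1: "dist (Fab (x + \<xi> *\<^sub>R dirv a + \<eta> *\<^sub>R dirv b)) (Fab x) < e/2"
    using near[OF xe, of a b] s inI[OF xe, of a b] I_sub by (intro d1(2)) auto
  have p2: "dist (Fba (x + \<xi>' *\<^sub>R dirv b + \<eta>' *\<^sub>R dirv a)) (Fba x) < e/2"
    using near[OF xe', of b a] s inI[OF xe', of b a] I_sub by (intro d2(2)) auto
  show False using p1 p2 eq e unfolding e_def dist_real_def
    by (simp add: abs_less_iff abs_if split: if_splits)
qed

lemma pd_comm:
  assumes F: "smooth_fun E F" and x: "x \<in> E"
  shows "pd E (pd E F a) b x = pd E (pd E F b) a x"
proof -
  define h where "h p = pd E (pd E F a) b p - pd E (pd E F b) a p" for p
  have ch: "continuous_on E h" unfolding h_def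
    by (intro continuous_on_diff sm_cont sm_pd F)
  have h0: "p \<in> I \<Longrightarrow> h p = 0" for p unfolding h_def using pd_comm_I[OF F] by simp
  obtain y t where xt: "x = (y, t)" by (cases x)
  have y: "y \<in> U" and t: "0 \<le> t" "t < T" using x xt by auto
  define c where "c = (T - t) / 2"
  have c: "c > 0" "t + c < T" using t unfolding c_def by (auto simp: field_simps)
  define X where "X n = (y, t + c * inverse (real (Suc n)))" for n
  have XI: "X n \<in> I" for n
  proof -
    have a: "0 < c * inverse (real (Suc n))" using c by simp
    have b: "c * inverse (real (Suc n)) \<le> c" using c by (simp add: field_simps)
    have "0 < t + c * inverse (real (Suc n))" "t + c * inverse (real (Suc n)) < T" using a b t c by linarith+
    then show ?thesis unfolding X_def I_def using y by simp
  qed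
  have "X \<longlonglongrightarrow> (y, t + c * 0)" unfolding X_def
    by (intro tendsto_Pair tendsto_const tendsto_add tendsto_mult LIMSEQ_inverse_real_of_nat)
  then have XL: "X \<longlonglongrightarrow> x" using xt by simp
  have "continuous (at x within E) h" using ch x continuous_on_eq_continuous_within by blast
  then have "(h \<circ> X) \<longlonglongrightarrow> h x"
    using XL XI I_sub unfolding continuous_within_sequentially by blast
  moreover have "h \<circ> X = (\<lambda>n. 0)" using XI h0 by (auto simp: comp_def)
  ultimately have "h x = 0" using LIMSEQ_unique tendsto_const by metis
  then show ?thesis unfolding h_def by simp
qed

end


lemma shift_hd:
  fixes F :: "'n::finite pt \<Rightarrow> real"
  assumes F: "(F has_derivative F') (at (shift \<tau> q) within D)" and sub: "shift \<tau> ` D' \<subseteq> D"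
  shows "((\<lambda>q. F (shift \<tau> q)) has_derivative F') (at q within D')"
proof -
  have s: "((shift \<tau> :: 'n pt \<Rightarrow> 'n pt) has_derivative (\<lambda>h. h)) (at q within D')"
  proof -
    have "shift \<tau> = (\<lambda>q::'n pt. q + (0, \<tau>))" by (auto simp: shift_def fun_eq_iff)
    then show ?thesis by (auto intro!: derivative_eq_intros)
  qed
  have "(F has_derivative F') (at (shift \<tau> q) within shift \<tau> ` D')"
    by (rule has_derivative_subset[OF F sub])
  from has_derivative_in_compose[OF s this] show ?thesis by simp
qed

lemma matrix_inv_props:
  fixes A :: "real^'n::finite^'n"
  assumes "invertible A"
  shows "A ** matrix_inv A = mat 1" "matrix_inv A ** A = mat 1"
proof -
  have "\<exists>A'. A ** A' = mat 1 \<and> A' ** A = mat 1" using assms unfolding invertible_def by blast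
  then have "A ** matrix_inv A = mat 1 \<and> matrix_inv A ** A = mat 1"
    unfolding matrix_inv_def by (rule someI_ex)
  then show "A ** matrix_inv A = mat 1" "matrix_inv A ** A = mat 1" by auto
qed

lemma matrix_inv_entry:
  fixes A :: "real^'n::finite^'n"
  assumes A: "invertible A"
  shows "matrix_inv A $ k $ l = det (\<chi> i j. if j = k then (if i = l then 1 else 0) else A$i$j) / det A"
proof -
  have d: "det A \<noteq> 0" using A invertible_det_nz by blast
  define x where "x = matrix_inv A *v axis l 1"
  have "A *v x = (A ** matrix_inv A) *v axis l 1" unfolding x_def by (simp add: matrix_vector_mul_assoc)
  also have "\<dots> = axis l 1" using matrix_inv_props[OF A] by simp
  finally have "x = (\<chi> k. det(\<chi> i j. if j=k then (axis l 1 :: real^'n)$i else A$i$j) / det A)"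
    using cramer[OF d] by blast
  then have "x $ k = det(\<chi> i j. if j=k then (axis l 1 :: real^'n)$i else A$i$j) / det A" by simp
  moreover have "x $ k = matrix_inv A $ k $ l"
    unfolding x_def matrix_vector_mult_def axis_def
    by (simp add: if_distrib[of "\<lambda>z. _ * z"] cong: if_cong)
  moreover have "(\<chi> i j. if j=k then (axis l 1 :: real^'n)$i else A$i$j) = (\<chi> i j. if j = k then (if i = l then 1 else 0) else A$i$j)"
    by (rule arg_cong[where f=vec_lambda]) (simp add: axis_def fun_eq_iff)
  ultimately show ?thesis by simp
qed

lemma posdef_invertible:
  fixes A :: "real^'n::finite^'n"
  assumes pos: "\<And>v. v \<noteq> 0 \<Longrightarrow> (\<Sum>i\<in>UNIV. \<Sum>j\<in>UNIV. A$i$j * v$i * v$j) > 0"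
  shows "invertible A"
proof -
  have ker: "\<forall>x. A *v x = 0 \<longrightarrow> x = 0"
  proof (intro allI impI)
    fix x assume Ax: "A *v x = 0"
    have "(\<Sum>i\<in>UNIV. \<Sum>j\<in>UNIV. A$i$j * x$i * x$j) = (\<Sum>i\<in>UNIV. x$i * (A *v x)$i)"
      by (simp add: matrix_vector_mult_def sum_distrib_left algebra_simps)
    also have "\<dots> = 0" using Ax by simp
    finally show "x = 0" using pos[of x] by force
  qed
  then obtain B where "B ** A = mat 1" using matrix_left_invertible_ker by blast
  then have "A ** B = mat 1" "B ** A = mat 1" using matrix_left_right_inverse by blast+
  then show ?thesis unfolding invertible_def by blast
qed

lemma matrix_inv_sym:
  fixes A :: "real^'n::finite^'n"
  assumes A: "invertible A" and sym: "transpose A = A"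
  shows "matrix_inv A $ i $ j = matrix_inv A $ j $ i"
proof -
  define B where "B = matrix_inv A"
  have 1: "A ** B = mat 1" "B ** A = mat 1" using matrix_inv_props[OF A] unfolding B_def by auto
  have "A ** transpose B = transpose (B ** transpose A)" by (simp add: matrix_transpose_mul)
  also have "\<dots> = mat 1" using 1 sym by (simp add: transpose_mat)
  finally have 2: "A ** transpose B = mat 1" .
  have "B = B ** (A ** transpose B)" using 2 by simp
  also have "\<dots> = transpose B" using 1 by (simp add: matrix_mul_assoc)
  finally have "B = transpose B" .
  then have "B $ i $ j = transpose B $ i $ j" by simp
  also have "\<dots> = B $ j $ i" by (simp add: transpose_def)
  finally show ?thesis unfolding B_def .
qed

lemma matrix_inv_mult_entry:
  fixes A :: "real^'n::finite^'n"
  assumes A: "invertible A"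
  shows "(\<Sum>m\<in>UNIV. matrix_inv A $ a $ m * A $ m $ b) = (if a = b then 1 else 0)"
proof -
  have "(matrix_inv A ** A) $ a $ b = (mat 1 :: real^'n^'n) $ a $ b" using matrix_inv_props[OF A] by simp
  then show ?thesis by (simp add: matrix_matrix_mult_def mat_def)
qed

lemma det_entries_sm:
  fixes M :: "'n::finite pt \<Rightarrow> real^'n^'n"
  assumes "box U"
  assumes "\<And>i j. smooth_fun (U \<times> {0..<T}) (\<lambda>p. M p $ i $ j)"
  shows "smooth_fun (U \<times> {0..<T}) (\<lambda>p. det (M p))"
proof -
  interpret box U T by fact
  show ?thesis unfolding det_def
    by (intro sm_sum sm_mult sm_const sm_prod assms(2))
qed




lemma sum_option: "(\<Sum>m\<in>(UNIV :: 'a::finite option set). F m) = F None + (\<Sum>m\<in>UNIV. F (Some m))"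
proof -
  have "(\<Sum>m\<in>(UNIV :: 'a option set). F m) = sum F (insert None (range Some))"
    by (simp only: UNIV_option_conv)
  also have "\<dots> = F None + sum F (range Some)" by (rule sum.insert) auto
  also have "sum F (range Some) = (\<Sum>m\<in>UNIV. F (Some m))"
    by (simp add: sum.reindex)
  finally show ?thesis .
qed

lemma shift0[simp]: "shift 0 p = p" by (simp add: shift_def)

locale rf_setup = box U T for U :: "(real^'n::finite) set" and T :: real +
  fixes g :: "'n metric" and f :: "'n pt \<Rightarrow> real"
  assumes g_smooth: "\<And>i j. smooth_fun E (g i j)"
  and g_sym: "\<And>i j p. p \<in> E \<Longrightarrow> g i j p = g j i p"
  and g_pos: "\<And>p v. p \<in> E \<Longrightarrow> v \<noteq> 0 \<Longrightarrow> (\<Sum>i\<in>UNIV. \<Sum>j\<in>UNIV. g i j p * v$i * v$j) > 0"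
  and f_smooth: "smooth_fun E f"
  and flow: "\<And>i j p. p \<in> E \<Longrightarrow> pd E (g i j) None p = -2 * Ric E g i j p + 2 * Hess E g f i j p"
begin

interpretation DC: dcalc E "smooth_fun E" "pd E"
proof
  show "smooth_fun E (\<lambda>x. c)" for c by (rule sm_const)
  show "smooth_fun E F \<Longrightarrow> smooth_fun E G \<Longrightarrow> smooth_fun E (\<lambda>x. F x + G x)" for F G by (rule sm_add)
  show "smooth_fun E F \<Longrightarrow> smooth_fun E G \<Longrightarrow> smooth_fun E (\<lambda>x. F x * G x)" for F G by (rule sm_mult)
  show "smooth_fun E F \<Longrightarrow> smooth_fun E (pd E F a)" for F a by (rule sm_pd)
  show "smooth_fun E F \<Longrightarrow> smooth_fun E G \<Longrightarrow> x \<in> E \<Longrightarrow> pd E (\<lambda>x. F x + G x) a x = pd E F a x + pd E G a x" for F G x a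
    by (rule pd_add) (auto intro: sm_diffble)
  show "smooth_fun E F \<Longrightarrow> smooth_fun E G \<Longrightarrow> x \<in> E \<Longrightarrow> pd E (\<lambda>x. F x * G x) a x = F x * pd E G a x + pd E F a x * G x" for F G x a
    by (rule pd_mult) (auto intro: sm_diffble)
  show "x \<in> E \<Longrightarrow> pd E (\<lambda>x. c) a x = 0" for x c a by (rule pd_const)
  show "(\<And>y. y \<in> E \<Longrightarrow> F y = G y) \<Longrightarrow> x \<in> E \<Longrightarrow> pd E F a x = pd E G a x" for F G x a
    by (rule pd_cong)
  show "smooth_fun E F \<Longrightarrow> x \<in> E \<Longrightarrow> pd E (pd E F a) b x = pd E (pd E F b) a x" for F x a b
    by (rule pd_comm)
qed

definition M :: "'n pt \<Rightarrow> real^'n^'n" where "M p = (\<chi> a b. g a b p)"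

lemma M_inv: "p \<in> E \<Longrightarrow> invertible (M p)"
  unfolding M_def by (rule posdef_invertible) (simp add: g_pos)

lemma M_sym: "p \<in> E \<Longrightarrow> transpose (M p) = M p"
  unfolding M_def transpose_def by (simp add: g_sym)

lemma ginv_M: "ginv g k l p = matrix_inv (M p) $ k $ l" unfolding ginv_def M_def ..

lemma ginv_sym: "p \<in> E \<Longrightarrow> ginv g k l p = ginv g l k p"
  unfolding ginv_M by (rule matrix_inv_sym[OF M_inv M_sym])

lemma ginv_g: "p \<in> E \<Longrightarrow> (\<Sum>m\<in>UNIV. ginv g a m p * g m b p) = (if a = b then 1 else 0)"
  using matrix_inv_mult_entry[OF M_inv, of p a b] unfolding ginv_M by (simp add: M_def)

lemma g_ginv: "p \<in> E \<Longrightarrow> (\<Sum>m\<in>UNIV. g a m p * ginv g m b p) = (if a = b then 1 else 0)"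
proof -
  assume p: "p \<in> E"
  have "(\<Sum>m\<in>UNIV. g a m p * ginv g m b p) = (\<Sum>m\<in>UNIV. ginv g b m p * g m a p)"
    by (rule sum.cong) (simp_all add: g_sym[OF p, of a] ginv_sym[OF p, of _ b] mult.commute)
  then show ?thesis using ginv_g[OF p, of b a] by auto
qed

lemma ginv_smooth: "smooth_fun E (ginv g k l)"
proof -
  define N where "N p = (\<chi> i j. if j = k then (if i = l then 1 else 0) else M p $i$j)" for p
  have eq: "ginv g k l p = det (N p) * inverse (det (M p))" if "p \<in> E" for p
    unfolding ginv_M N_def using matrix_inv_entry[OF M_inv[OF that]] by (simp add: divide_inverse)
  have sN: "smooth_fun E (\<lambda>p. det (N p))"
  proof (rule det_entries_sm[OF box_axioms])
    show "smooth_fun E (\<lambda>p. N p $ i $ j)" for i j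
      by (cases "j = k"; cases "i = l") (simp_all add: N_def M_def sm_const g_smooth)
  qed
  have sM: "smooth_fun E (\<lambda>p. det (M p))"
    by (rule det_entries_sm[OF box_axioms]) (simp add: M_def g_smooth)
  have nz: "p \<in> E \<Longrightarrow> det (M p) \<noteq> 0" for p using M_inv invertible_det_nz by blast
  show ?thesis
    by (rule sm_cong[OF _ sm_mult[OF sN sm_inverse[OF sM nz]]]) (simp add: eq)
qed


definition phi :: "'n pt \<Rightarrow> real" where
  "phi = (\<lambda>q. - (1/2) * Scal E g q + pd E f None q - (1/2) * gradSq E g f q)"

definition Gt :: "'n option \<Rightarrow> 'n option \<Rightarrow> 'n option \<Rightarrow> 'n pt \<Rightarrow> real" where
  "Gt = TChr E g f 0"

lemma Gt_N[simp]: "Gt a b None = (\<lambda>p. 0)" unfolding Gt_def TChr_def by (rule ext) simp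
lemma Gt_SSS[simp]: "Gt (Some i) (Some j) (Some k) = Chr E g i j k" unfolding Gt_def TChr_def by (rule ext) simp
lemma Gt_SN[simp]: "Gt (Some i) None (Some k) = (\<lambda>p. - RicUp E g i k p + HessUp E g f i k p)"
  unfolding Gt_def TChr_def by (rule ext) simp
lemma Gt_NS[simp]: "Gt None (Some i) (Some k) = (\<lambda>p. - RicUp E g i k p + HessUp E g f i k p)"
  unfolding Gt_def TChr_def by (rule ext) simp
lemma Gt_NN[simp]: "Gt None None (Some k) = gradUp E g phi k"
  unfolding Gt_def TChr_def phi_def by (rule ext) simp

lemmas smr = DC.sm_rules ginv_smooth g_smooth f_smooth

lemma Chr_sm: "smooth_fun E (Chr E g i j k)"
  unfolding Chr_def[abs_def] by (intro smr)
lemma Riem_sm: "smooth_fun E (Riem E g i j k l)"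
  unfolding Riem_def[abs_def] by (intro smr Chr_sm)
lemma Ric_sm: "smooth_fun E (Ric E g i j)"
  unfolding Ric_def[abs_def] by (intro smr Riem_sm)
lemma Scal_sm: "smooth_fun E (Scal E g)"
  unfolding Scal_def[abs_def] by (intro smr Ric_sm)
lemma RicUp_sm: "smooth_fun E (RicUp E g i k)"
  unfolding RicUp_def[abs_def] by (intro smr Ric_sm)
lemma Hess_sm: "smooth_fun E (Hess E g f i j)"
  unfolding Hess_def[abs_def] by (intro smr Chr_sm)
lemma HessUp_sm: "smooth_fun E (HessUp E g f i k)"
  unfolding HessUp_def[abs_def] by (intro smr Hess_sm)
lemma gradSq_sm: "smooth_fun E (gradSq E g f)"
  unfolding gradSq_def[abs_def] by (intro smr)
lemma phi_sm: "smooth_fun E phi"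
  unfolding phi_def by (intro smr Scal_sm gradSq_sm)
lemma gradUp_sm: "smooth_fun E (gradUp E g phi k)"
  unfolding gradUp_def[abs_def] by (intro smr phi_sm)

lemma Gt_sm: "smooth_fun E (Gt a b c)"
  by (cases a; cases b; cases c) (simp_all add: Chr_sm RicUp_sm HessUp_sm gradUp_sm smr)

lemma pd_g_sym: "p \<in> E \<Longrightarrow> pd E (g i j) a p = pd E (g j i) a p"
  by (rule pd_cong) (simp_all add: g_sym)

lemma Chr_sym: "p \<in> E \<Longrightarrow> Chr E g i j k p = Chr E g j i k p"
  unfolding Chr_def by (simp add: pd_g_sym[of p i j] algebra_simps)

lemma Gt_sym: "p \<in> E \<Longrightarrow> Gt a b c p = Gt b a c p"
  by (cases a; cases b; cases c) (simp_all add: Chr_sym)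

definition hu :: "'n option \<Rightarrow> 'n option \<Rightarrow> 'n pt \<Rightarrow> real" where
  "hu a b p = (case a of None \<Rightarrow> 0 | Some i \<Rightarrow> (case b of None \<Rightarrow> 0 | Some j \<Rightarrow> ginv g i j p))"
definition hl :: "'n option \<Rightarrow> 'n option \<Rightarrow> 'n pt \<Rightarrow> real" where
  "hl a b p = (case a of None \<Rightarrow> 0 | Some i \<Rightarrow> (case b of None \<Rightarrow> 0 | Some j \<Rightarrow> g i j p))"

lemma hu_simps[simp]: "hu None b p = 0" "hu a None p = 0" "hu (Some i) (Some j) p = ginv g i j p"
  unfolding hu_def by (cases a; simp)+
lemma hl_simps[simp]: "hl None b p = 0" "hl a None p = 0" "hl (Some i) (Some j) p = g i j p"
  unfolding hl_def by (cases a; simp)+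

lemma hu_sm: "smooth_fun E (hu a b)"
proof -
  have "hu a b = (case a of None \<Rightarrow> (\<lambda>p. 0) | Some i \<Rightarrow> (case b of None \<Rightarrow> (\<lambda>p. 0) | Some j \<Rightarrow> ginv g i j))"
    by (rule ext) (cases a; cases b; simp)
  then show ?thesis by (cases a; cases b) (simp_all add: smr)
qed

lemma hl_sm: "smooth_fun E (hl a b)"
proof -
  have "hl a b = (case a of None \<Rightarrow> (\<lambda>p. 0) | Some i \<Rightarrow> (case b of None \<Rightarrow> (\<lambda>p. 0) | Some j \<Rightarrow> g i j))"
    by (rule ext) (cases a; cases b; simp)
  then show ?thesis by (cases a; cases b) (simp_all add: smr)
qed

interpretation TM: tfcm E "smooth_fun E" "pd E" Gt "range Some" hu hl
proof (intro tfcm.intro tfc.intro DC.dcalc_axioms)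
  show "tfc_axioms E (smooth_fun E) Gt"
    by unfold_locales (simp_all add: Gt_sm Gt_sym)
  show "tfcm_axioms E (smooth_fun E) Gt (range Some) hu hl"
  proof
    show "smooth_fun E (hu a b)" for a b by (rule hu_sm)
    show "smooth_fun E (hl a b)" for a b by (rule hl_sm)
    show "x \<in> E \<Longrightarrow> hu a b x = hu b a x" for x a b by (cases a; cases b) (simp_all add: ginv_sym)
    show "x \<in> E \<Longrightarrow> hl a b x = hl b a x" for x a b by (cases a; cases b) (simp_all add: g_sym)
    show "a \<notin> range Some \<or> b \<notin> range Some \<Longrightarrow> hu a b x = 0" for a b x by (cases a; cases b) auto
    show "a \<notin> range Some \<or> b \<notin> range Some \<Longrightarrow> hl a b x = 0" for a b x by (cases a; cases b) auto
    show "c \<notin> range Some \<Longrightarrow> Gt a b c x = 0" for a b c x by (cases c) auto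
    show "x \<in> E \<Longrightarrow> (\<Sum>m\<in>UNIV. hu a m x * hl m b x) = (if a = b \<and> a \<in> range Some then 1 else 0)" for x a b
      by (cases a; cases b) (simp_all add: sum_option ginv_g)
  qed
qed


lemma hl_SS_fun[simp]: "hl (Some i) (Some j) = g i j" by (rule ext) simp
lemma hu_SS_fun[simp]: "hu (Some i) (Some j) = ginv g i j" by (rule ext) simp

lemma Rm_SSSS: "x \<in> E \<Longrightarrow> TM.Rm (Some a) (Some b) (Some c) (Some e) x = Riem E g a b c e x"
  unfolding TM.Rm_def Riem_def by (simp add: sum_option)

lemma Rc_SS: "x \<in> E \<Longrightarrow> TM.Rc (Some b) (Some c) x = Ric E g b c x"
  unfolding TM.Rc_def Ric_def by (simp add: sum_option TM.Rm_out Rm_SSSS)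

lemma Hs_SS: "x \<in> E \<Longrightarrow> TM.Hs f (Some a) (Some b) x = Hess E g f a b x"
  unfolding TM.Hs_def TM.nab1_def Hess_def by (simp add: sum_option)

lemma trRc_Scal: "x \<in> E \<Longrightarrow> TM.trRc x = Scal E g x"
  unfolding TM.trRc_def Scal_def by (simp add: sum_option Rc_SS)

lemma Chr_lower: "x \<in> E \<Longrightarrow> (\<Sum>m\<in>UNIV. Chr E g i b m x * g m c x)
   = (1/2) * (pd E (g b c) (Some i) x + pd E (g i c) (Some b) x - pd E (g i b) (Some c) x)"
proof -
  assume x: "x \<in> E"
  define P where "P l = pd E (g b l) (Some i) x + pd E (g i l) (Some b) x - pd E (g i b) (Some l) x" for l
  have "(\<Sum>m\<in>UNIV. Chr E g i b m x * g m c x) = (\<Sum>m\<in>UNIV. \<Sum>l\<in>UNIV. (1/2) * P l * (ginv g m l x * g m c x))"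
    unfolding Chr_def P_def by (simp add: sum_distrib_left sum_distrib_right algebra_simps)
  also have "\<dots> = (\<Sum>l\<in>UNIV. (1/2) * P l * (\<Sum>m\<in>UNIV. ginv g l m x * g m c x))"
    by (subst sum.swap) (simp add: sum_distrib_left ginv_sym[OF x, of _ "_"])
  also have "\<dots> = (1/2) * P c" using x by (simp add: ginv_g if_distrib[of "\<lambda>z. _ * z"] cong: if_cong)
  finally show ?thesis unfolding P_def .
qed

lemma LC: "x \<in> E \<Longrightarrow> pd E (g b c) (Some i) x = (\<Sum>m\<in>UNIV. Chr E g i b m x * g m c x) + (\<Sum>m\<in>UNIV. Chr E g i c m x * g b m x)"
proof -
  assume x: "x \<in> E"
  have "(\<Sum>m\<in>UNIV. Chr E g i c m x * g b m x) = (\<Sum>m\<in>UNIV. Chr E g i c m x * g m b x)"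
    by (rule sum.cong) (simp_all add: g_sym[OF x, of b])
  then show ?thesis using Chr_lower[OF x, of i b c] Chr_lower[OF x, of i c b] pd_g_sym[OF x, of c b] by simp
qed

lemma parL_S: "TM.parL (Some i)"
  unfolding TM.parL_def
proof (intro ballI allI impI)
  fix x and b c :: "'n option" assume x: "x \<in> E" and b: "b \<in> range Some" and c: "c \<in> range Some"
  then obtain b' c' where bc: "b = Some b'" "c = Some c'" by auto
  show "pd E (hl b c) (Some i) x = (\<Sum>m\<in>UNIV. Gt (Some i) b m x * hl m c x) + (\<Sum>m\<in>UNIV. Gt (Some i) c m x * hl b m x)"
    unfolding bc by (simp add: sum_option LC[OF x])
qed

lemma par_S: "TM.par (Some i)" by (rule TM.parL_par[OF parL_S])

lemma Ric_sym: "x \<in> E \<Longrightarrow> Ric E g b c x = Ric E g c b x"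
  using TM.Rc_sym[OF par_S[of b] par_S[of c], of x] by (simp add: Rc_SS)

lemma Hess_sym: "x \<in> E \<Longrightarrow> Hess E g f b c x = Hess E g f c b x"
  using TM.Hs_sym[OF f_smooth, of x "Some b" "Some c"] by (simp add: Hs_SS)

lemma up_lower: "x \<in> E \<Longrightarrow> (\<Sum>m\<in>UNIV. (\<Sum>l\<in>UNIV. ginv g m l x * X l) * g m c x) = X c"
proof -
  assume x: "x \<in> E"
  have "(\<Sum>m\<in>UNIV. (\<Sum>l\<in>UNIV. ginv g m l x * X l) * g m c x) = (\<Sum>m\<in>UNIV. \<Sum>l\<in>UNIV. X l * (ginv g l m x * g m c x))"
    by (rule sum.cong[OF refl]) (simp add: sum_distrib_right sum_distrib_left ginv_sym[OF x, of _ "_"] algebra_simps)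
  also have "\<dots> = (\<Sum>l\<in>UNIV. \<Sum>m\<in>UNIV. X l * (ginv g l m x * g m c x))" by (rule sum.swap)
  also have "\<dots> = (\<Sum>l\<in>UNIV. X l * (\<Sum>m\<in>UNIV. ginv g l m x * g m c x))" by (simp add: sum_distrib_left)
  also have "\<dots> = X c" using x by (simp add: ginv_g if_distrib[of "\<lambda>z. _ * z"] cong: if_cong)
  finally show ?thesis .
qed

lemma RicHess_up: "- RicUp E g i k p + HessUp E g f i k p = (\<Sum>l\<in>UNIV. ginv g k l p * (Hess E g f i l p - Ric E g i l p))"
  unfolding RicUp_def HessUp_def by (simp add: algebra_simps sum_subtractf)

lemma parL_N: "TM.parL None"
  unfolding TM.parL_def
proof (intro ballI allI impI)
  fix x and b c :: "'n option" assume x: "x \<in> E" and b: "b \<in> range Some" and c: "c \<in> range Some"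
  then obtain b' c' where bc: "b = Some b'" "c = Some c'" by auto
  define A where "A i l = Hess E g f i l x - Ric E g i l x" for i l
  have 1: "(\<Sum>m\<in>UNIV. (- RicUp E g b' m x + HessUp E g f b' m x) * g m c' x) = A b' c'"
    unfolding RicHess_up A_def by (rule up_lower[OF x])
  have 2: "(\<Sum>m\<in>UNIV. (- RicUp E g c' m x + HessUp E g f c' m x) * g b' m x) = A c' b'"
  proof -
    have "(\<Sum>m\<in>UNIV. (- RicUp E g c' m x + HessUp E g f c' m x) * g b' m x)
        = (\<Sum>m\<in>UNIV. (- RicUp E g c' m x + HessUp E g f c' m x) * g m b' x)"
      by (rule sum.cong) (simp_all add: g_sym[OF x, of b'])
    then show ?thesis unfolding RicHess_up A_def using up_lower[OF x] by simp
  qed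
  have 3: "A c' b' = A b' c'" unfolding A_def using Ric_sym[OF x] Hess_sym[OF x] by simp
  show "pd E (hl b c) None x = (\<Sum>m\<in>UNIV. Gt None b m x * hl m c x) + (\<Sum>m\<in>UNIV. Gt None c m x * hl b m x)"
    unfolding bc using 1 2 3 flow[OF x, of b' c'] by (simp add: sum_option A_def)
qed

lemma parL_all: "TM.parL a" by (cases a) (simp_all add: parL_S parL_N)


interpretation RF: rfl E "smooth_fun E" "pd E" Gt "range Some" hu hl f phi None
proof (intro rfl.intro TM.tfcm_axioms)
  show "rfl_axioms E (smooth_fun E) (pd E) Gt (range Some) hu hl f phi None"
  proof
    show "smooth_fun E f" by (rule f_smooth)
    show "smooth_fun E phi" by (rule phi_sm)
    show "None \<notin> range Some" by auto
    show "a \<notin> range Some \<Longrightarrow> a = None" for a :: "'n option" by (cases a) auto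
    show "TM.parL a" for a by (rule parL_all)
    show "Gt k None p x = (\<Sum>l\<in>UNIV. hu p l x * (TM.Hs f k l x - TM.Rc k l x))"
      if kr: "k \<in> range Some" and xE: "x \<in> E" for k p x
    proof -
      obtain k' where k: "k = Some k'" using kr by auto
      show ?thesis
      proof (cases p)
        case None then show ?thesis by simp
      next
        case (Some p')
        then show ?thesis unfolding k using xE
          by (simp add: sum_option RicUp_def HessUp_def Hs_SS Rc_SS sum_subtractf algebra_simps)
      qed
    qed
    show "Gt None None p x = (\<Sum>l\<in>UNIV. hu p l x * pd E phi l x)" if "x \<in> E" for p x
      by (cases p) (simp_all add: sum_option gradUp_def)
    show "phi x = - (1/2) * TM.trRc x + pd E f None x
        - (1/2) * (\<Sum>b\<in>UNIV. \<Sum>c\<in>UNIV. hu b c x * (pd E f b x * pd E f c x))" if "x \<in> E" for x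
      using that unfolding phi_def gradSq_def by (simp add: trRc_Scal sum_option algebra_simps)
  qed
qed


context
  fixes \<tau> :: real
  assumes tau: "0 \<le> \<tau>"
begin

lemma shift_sub: "shift \<tau> ` (U \<times> {0..<T - \<tau>}) \<subseteq> E"
  using tau by (auto simp: shift_def)

lemma pd_sh:
  assumes F: "smooth_fun E F" and q: "q \<in> U \<times> {0..<T - \<tau>}"
  shows "pd (U \<times> {0..<T - \<tau>}) (\<lambda>q. F (shift \<tau> q)) a q = pd E F a (shift \<tau> q)"
proof -
  interpret B: box U "T - \<tau>" by unfold_locales (rule U_open)
  have sq: "shift \<tau> q \<in> E" using shift_sub q by auto
  have hd: "(F has_derivative frechet_derivative F (at (shift \<tau> q) within E)) (at (shift \<tau> q) within E)"
    by (rule fdw[OF sm_diffble[OF F sq]])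
  show ?thesis
    using B.pdE[OF q shift_hd[OF hd shift_sub]] unfolding pd_def by simp
qed

lemma TChr_sh: "TChr E g f \<tau> a b c = (\<lambda>q. Gt a b c (shift \<tau> q))"
  by (rule ext) (cases a; cases b; cases c; simp add: Gt_def TChr_def)

lemma TRiem_sh: "q \<in> U \<times> {0..<T - \<tau>} \<Longrightarrow> TRiem E (U \<times> {0..<T - \<tau>}) g f \<tau> a b c e q = TM.Rm a b c e (shift \<tau> q)"
  unfolding TRiem_def TM.Rm_def TChr_sh by (simp add: pd_sh Gt_sm)

lemma TRic_sh: "q \<in> U \<times> {0..<T - \<tau>} \<Longrightarrow> TRic E (U \<times> {0..<T - \<tau>}) g f \<tau> b c q = TM.Rc b c (shift \<tau> q)"
  unfolding TRic_def TM.Rc_def by (simp add: TRiem_sh)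

lemma THess_sh:
  assumes q: "q \<in> U \<times> {0..<T - \<tau>}"
  shows "THess E (U \<times> {0..<T - \<tau>}) g f \<tau> (\<lambda>q. f (shift \<tau> q)) b c q = TM.Hs f b c (shift \<tau> q)"
proof -
  have 1: "q' \<in> U \<times> {0..<T - \<tau>} \<Longrightarrow> pd (U \<times> {0..<T - \<tau>}) (\<lambda>q. f (shift \<tau> q)) m q' = pd E f m (shift \<tau> q')" for q' m
    by (rule pd_sh[OF f_smooth])
  have "pd (U \<times> {0..<T - \<tau>}) (pd (U \<times> {0..<T - \<tau>}) (\<lambda>q. f (shift \<tau> q)) c) b q
      = pd (U \<times> {0..<T - \<tau>}) (\<lambda>q. pd E f c (shift \<tau> q)) b q"
    by (rule pd_cong[OF _ q]) (rule 1)
  also have "\<dots> = pd E (pd E f c) b (shift \<tau> q)" by (rule pd_sh[OF sm_pd[OF f_smooth] q])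
  finally have 2: "pd (U \<times> {0..<T - \<tau>}) (pd (U \<times> {0..<T - \<tau>}) (\<lambda>q. f (shift \<tau> q)) c) b q = pd E (pd E f c) b (shift \<tau> q)" .
  show ?thesis unfolding THess_def TM.Hs_def TM.nab1_def TChr_sh using q by (simp add: 1 2)
qed

lemma S_sh: "q \<in> U \<times> {0..<T - \<tau>} \<Longrightarrow>
   TRic E (U \<times> {0..<T - \<tau>}) g f \<tau> b c q - THess E (U \<times> {0..<T - \<tau>}) g f \<tau> (\<lambda>q. f (shift \<tau> q)) b c q
   = RF.S b c (shift \<tau> q)"
  by (simp add: RF.S_def TRic_sh THess_sh)

lemma TCov2_sh:
  assumes q: "q \<in> U \<times> {0..<T - \<tau>}"
  shows "TCov2 E (U \<times> {0..<T - \<tau>}) g f \<tau>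
     (\<lambda>b c q. TRic E (U \<times> {0..<T - \<tau>}) g f \<tau> b c q - THess E (U \<times> {0..<T - \<tau>}) g f \<tau> (\<lambda>q. f (shift \<tau> q)) b c q)
     a b c q = TM.nab2 RF.S a b c (shift \<tau> q)"
proof -
  have "pd (U \<times> {0..<T - \<tau>}) (\<lambda>q. TRic E (U \<times> {0..<T - \<tau>}) g f \<tau> b c q - THess E (U \<times> {0..<T - \<tau>}) g f \<tau> (\<lambda>q. f (shift \<tau> q)) b c q) a q
     = pd (U \<times> {0..<T - \<tau>}) (\<lambda>q. RF.S b c (shift \<tau> q)) a q"
    by (rule pd_cong[OF _ q]) (rule S_sh)
  also have "\<dots> = pd E (RF.S b c) a (shift \<tau> q)" by (rule pd_sh[OF RF.S_sm q])
  finally have 1: "pd (U \<times> {0..<T - \<tau>}) (\<lambda>q. TRic E (U \<times> {0..<T - \<tau>}) g f \<tau> b c q - THess E (U \<times> {0..<T - \<tau>}) g f \<tau> (\<lambda>q. f (shift \<tau> q)) b c q) a q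
     = pd E (RF.S b c) a (shift \<tau> q)" .
  show ?thesis unfolding TCov2_def TM.nab2_def TChr_sh using q by (simp add: 1 S_sh)
qed


lemma main:
  assumes p: "p \<in> U \<times> {0..<T - \<tau>}"
  shows "(let S = (\<lambda>b c q. TRic E (U \<times> {0..<T - \<tau>}) g f \<tau> b c q - THess E (U \<times> {0..<T - \<tau>}) g f \<tau> (\<lambda>q. f (shift \<tau> q)) b c q);
         Cv = TCov2 E (U \<times> {0..<T - \<tau>}) g f \<tau> S
     in (\<forall>i j k.
           Cv (Some j) (Some k) (Some i) p =
             Cv (Some k) (Some j) (Some i) p
             + (\<Sum>q\<in>UNIV. g q i (shift \<tau> p) * TRiem E (U \<times> {0..<T - \<tau>}) g f \<tau> (Some k) (Some j) None (Some q) p))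
      \<and> (\<forall>i k.
           Cv None (Some k) (Some i) p =
             Cv (Some k) None (Some i) p
             + (\<Sum>q\<in>UNIV. g q k (shift \<tau> p) * TRiem E (U \<times> {0..<T - \<tau>}) g f \<tau> (Some i) None None (Some q) p))
      \<and> (\<forall>j k. Cv (Some j) None (Some k) p = Cv (Some k) None (Some j) p)
      \<and> (\<forall>k. Cv None None (Some k) p = Cv (Some k) None None p))"
proof -
  have x: "shift \<tau> p \<in> E" using shift_sub p by auto
  have sc: "(\<Sum>q\<in>UNIV. g q i (shift \<tau> p) * TRiem E (U \<times> {0..<T - \<tau>}) g f \<tau> a b None (Some q) p)
      = (\<Sum>q\<in>UNIV. hl q (Some i) (shift \<tau> p) * TM.Rm a b None q (shift \<tau> p))" for i a b
    by (simp add: sum_option TRiem_sh[OF p])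
  have I1: "TM.nab2 RF.S (Some j) (Some k) (Some i) (shift \<tau> p) = TM.nab2 RF.S (Some k) (Some j) (Some i) (shift \<tau> p)
      + (\<Sum>q\<in>UNIV. hl q (Some i) (shift \<tau> p) * TM.Rm (Some k) (Some j) None q (shift \<tau> p))" for i j k
    by (rule RF.identity1[OF _ _ _ x]) auto
  have I2: "TM.nab2 RF.S None (Some k) (Some i) (shift \<tau> p) = TM.nab2 RF.S (Some k) None (Some i) (shift \<tau> p)
      + (\<Sum>q\<in>UNIV. hl q (Some k) (shift \<tau> p) * TM.Rm (Some i) None None q (shift \<tau> p))" for i k
    by (rule RF.identity2[OF _ _ x]) auto
  have I3: "TM.nab2 RF.S (Some j) None (Some k) (shift \<tau> p) = TM.nab2 RF.S (Some k) None (Some j) (shift \<tau> p)" for j k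
    by (rule RF.identity3[OF _ _ x]) auto
  have I4: "TM.nab2 RF.S None None (Some k) (shift \<tau> p) = TM.nab2 RF.S (Some k) None None (shift \<tau> p)" for k
    by (rule RF.identity4[OF _ x]) auto
  show ?thesis unfolding Let_def TCov2_sh[OF p] sc using I1 I2 I3 I4 by blast
qed

end

end

theorem corollary3p5:
  fixes U :: "(real^'n::finite) set" and T \<tau> :: real
    and g :: "'n metric" and f :: "'n pt \<Rightarrow> real"
  defines "D \<equiv> U \<times> {0..<T}"
    and "D' \<equiv> U \<times> {0..<T - \<tau>}"
    and "ft \<equiv> (\<lambda>q. f (shift \<tau> q))"
  assumes U: "open U"
    and tau: "0 \<le> \<tau>" "\<tau> < T"
    and g_smooth: "\<And>i j. smooth_fun D (g i j)"
    and g_sym: "\<And>i j p. p \<in> D \<Longrightarrow> g i j p = g j i p"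
    and g_pos: "\<And>p v. p \<in> D \<Longrightarrow> v \<noteq> 0 \<Longrightarrow> (\<Sum>i\<in>UNIV. \<Sum>j\<in>UNIV. g i j p * v$i * v$j) > 0"
    and f_smooth: "smooth_fun D f"
    and flow: "\<And>i j p. p \<in> D \<Longrightarrow>
        pd D (g i j) None p = -2 * Ric D g i j p + 2 * Hess D g f i j p"
    and p: "p \<in> D'"
  shows
   "(let S = (\<lambda>b c q. TRic D D' g f \<tau> b c q - THess D D' g f \<tau> ft b c q);
         Cv = TCov2 D D' g f \<tau> S
     in (\<forall>i j k.
           Cv (Some j) (Some k) (Some i) p =
             Cv (Some k) (Some j) (Some i) p
             + (\<Sum>q\<in>UNIV. g q i (shift \<tau> p) * TRiem D D' g f \<tau> (Some k) (Some j) None (Some q) p))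
      \<and> (\<forall>i k.
           Cv None (Some k) (Some i) p =
             Cv (Some k) None (Some i) p
             + (\<Sum>q\<in>UNIV. g q k (shift \<tau> p) * TRiem D D' g f \<tau> (Some i) None None (Some q) p))
      \<and> (\<forall>j k. Cv (Some j) None (Some k) p = Cv (Some k) None (Some j) p)
      \<and> (\<forall>k. Cv None None (Some k) p = Cv (Some k) None None p))"
proof -
  interpret rf_setup U T g f
    by (unfold_locales; (rule U)?) (use g_smooth g_sym g_pos f_smooth flow in \<open>simp_all add: D_def\<close>)
  show ?thesis unfolding D_def D'_def ft_def
    by (rule main[OF tau(1) p[unfolded D'_def]])
qed


end
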